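(* Let $s$ be even and let $A_1,\ldots,A_{s/2}\in\mathbb{R}^{n\times n}$ be symmetric matrices satisfying $\sum_{j=1}^{s/2}j^2A_j=I$. Let $U:\mathbb{R}^n\to\mathbb{R}$ be smooth and consider the linear multistep method \[\sum_{j=1}^{s/2}A_j\big(y(t-jh)-2y(t)+y(t+jh)\big)=h^2\nabla U(y(t))\] for the ODE $\ddot y=\nabla U(y)$, with its modified equation $\ddot y=\nabla U(y)+\sum_{i=1}^N h^i g_i(y,\dot y)+\mathcal{O}(h^{N+1})$, where $N\in\mathbb{N}$ is the considered order of the series expansion. Let $z=(y,\dot y)$, $H(z)=\frac12\|\dot y\|^2-U(y)$ and $J=\begin{pmatrix}0&-I\\ I&0\end{pmatrix}$. Then there exist a modified symplectic structure $J^{[N]}_{\mathrm{mod}}$ which is $\mathcal{O}(h)$-close to $J$ and a modified Hamiltonian $H^{[N]}_{\mathrm{mod}}$ which is $\mathcal{O}(h)$-close to $H$ such that \[\dot z(t)=\big(J^{[N]}_{\mathrm{mod}}(z)\big)^{-1}\nabla H^{[N]}_{\mathrm{mod}}(z(t))\] is equivalent to the modified equation up to terms of order $\mathcal{O}(h^{N+1})$.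
   Context: $h$ is treated as a formal variable. The modified equation is obtained as follows: Taylor-expanding $y(t\pm jh)$ in the multistep formula in powers of $h$ and using $\sum_j j^2A_j=I$ yields an expression $\ddot y=\nabla U(y)+\sum_{i=1}^N h^i\tilde g_i(y,\dot y,\ldots,y^{(a_i)})+\mathcal{O}(h^{N+1})$ with $h$-independent $\tilde g_i$; iteratively replacing third and higher derivatives of $y$ on the right-hand side by derivatives of this expression itself gives $\ddot y=\nabla U(y)+\sum_{i=1}^N h^i g_i(y,\dot y)+\mathcal{O}(h^{N+1})$. $J^{[N]}_{\mathrm{mod}}$ and $H^{[N]}_{\mathrm{mod}}$ are polynomials in $h$ of degree at most $N$ whose coefficients are functions of $z$; $J^{[N]}_{\mathrm{mod}}$ is a skew-symmetric matrix-valued function representing a closed 2-form (symplectic structure). "$\mathcal{O}(h)$-close to $J$" means the zeroth coefficient of $J^{[N]}_{\mathrm{mod}}$ in $h$ equals $J$; analogously for $H$. *)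

theory Defs
  imports "HOL-Analysis.Analysis"
begin

definition dirderiv :: "('a::real_normed_vector \<Rightarrow> 'b::real_normed_vector) \<Rightarrow> 'a \<Rightarrow> 'a \<Rightarrow> 'b" where
  "dirderiv F z w = vector_derivative (\<lambda>t::real. F (z + t *\<^sub>R w)) (at 0)"

definition pd :: "(real^'m \<Rightarrow> 'b::real_normed_vector) \<Rightarrow> 'm \<Rightarrow> real^'m \<Rightarrow> 'b" where
  "pd F k z = dirderiv F z (axis k 1)"

definition grad :: "(real^'m \<Rightarrow> real) \<Rightarrow> real^'m \<Rightarrow> real^'m" where
  "grad F z = (\<chi> k. pd F k z)"

fun Ck :: "nat \<Rightarrow> ('a::real_normed_vector \<Rightarrow> 'b::real_normed_vector) \<Rightarrow> bool" where
  "Ck 0 F = continuous_on UNIV F"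
| "Ck (Suc k) F = (F differentiable_on UNIV \<and> (\<forall>w. Ck k (\<lambda>z. dirderiv F z w)))"

definition smooth :: "('a::real_normed_vector \<Rightarrow> 'b::real_normed_vector) \<Rightarrow> bool" where
  "smooth F = (\<forall>k. Ck k F)"

text \<open>Formal series (in h) of the right-hand side of the modified equation
  ddot y = f(y, dot y): coefficient 0 is grad U, coefficient i \<ge> 1 is g i.\<close>
definition fser :: "(real^'n \<Rightarrow> real) \<Rightarrow> (nat \<Rightarrow> real^'n \<Rightarrow> real^'n \<Rightarrow> real^'n)
    \<Rightarrow> nat \<Rightarrow> real^'n \<Rightarrow> real^'n \<Rightarrow> real^'n" where
  "fser U g i y v = (if i = 0 then grad U y else g i y v)"

text \<open>Total time derivative of a formal series G(y, dot y) (coefficients in h) along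
  solutions of ddot y = f(y, dot y), f a formal series:
  d/dt G = D_y G . dot y + D_v G . f, coefficientwise (Cauchy product in h).\<close>
definition Dt :: "(nat \<Rightarrow> real^'n \<Rightarrow> real^'n \<Rightarrow> real^'n)
    \<Rightarrow> (nat \<Rightarrow> real^'n \<Rightarrow> real^'n \<Rightarrow> real^'n)
    \<Rightarrow> nat \<Rightarrow> real^'n \<Rightarrow> real^'n \<Rightarrow> real^'n" where
  "Dt f G m y v = dirderiv (\<lambda>y'. G m y' v) y v
     + (\<Sum>a\<le>m. dirderiv (\<lambda>v'. G a y v') v (f (m - a) y v))"

fun Dpow :: "(nat \<Rightarrow> real^'n \<Rightarrow> real^'n \<Rightarrow> real^'n) \<Rightarrow> nat
    \<Rightarrow> (nat \<Rightarrow> real^'n \<Rightarrow> real^'n \<Rightarrow> real^'n)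
    \<Rightarrow> nat \<Rightarrow> real^'n \<Rightarrow> real^'n \<Rightarrow> real^'n" where
  "Dpow f 0 G = G"
| "Dpow f (Suc k) G = Dt f (Dpow f k G)"

definition moment :: "nat \<Rightarrow> (nat \<Rightarrow> real^'n^'n) \<Rightarrow> nat \<Rightarrow> real^'n^'n" where
  "moment s A k = (\<Sum>j=1..s div 2. (real j ^ (2*k)) *\<^sub>R A j)"

text \<open>Taylor expansion of the scheme, division by h^2 and sum_j j^2 A_j = I give
  ddot y = grad U(y) - sum_{k\<ge>2} 2 h^(2k-2)/(2k)! M_k y^(2k),
  and y^(2k) = (d/dt)^(2k-2) ddot y; the coefficients of h^m, 1 \<le> m \<le> N, must agree.
  (This triangular system determines g_1..g_N uniquely; it is exactly the result of
  the iterative replacement of higher derivatives.)\<close>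
definition is_modified_equation ::
  "nat \<Rightarrow> (nat \<Rightarrow> real^'n^'n) \<Rightarrow> (real^'n \<Rightarrow> real) \<Rightarrow> nat
     \<Rightarrow> (nat \<Rightarrow> real^'n \<Rightarrow> real^'n \<Rightarrow> real^'n) \<Rightarrow> bool" where
  "is_modified_equation s A U N g \<longleftrightarrow>
     (\<forall>m. 1 \<le> m \<and> m \<le> N \<longrightarrow> (\<forall>y v.
        g m y v = - (\<Sum>k=2..m div 2 + 1.
            (2 / fact (2*k)) *\<^sub>R (moment s A k *v Dpow (fser U g) (2*k - 2) (fser U g) (m - (2*k - 2)) y v))))"

definition yof :: "real^('n::finite + 'n) \<Rightarrow> real^'n" where
  "yof z = (\<chi> i. z $ Inl i)"

definition vof :: "real^('n::finite + 'n) \<Rightarrow> real^'n" where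
  "vof z = (\<chi> i. z $ Inr i)"

definition join :: "real^'n::finite \<Rightarrow> real^'n \<Rightarrow> real^('n + 'n)" where
  "join a b = (\<chi> k. case k of Inl i \<Rightarrow> a $ i | Inr i \<Rightarrow> b $ i)"

definition Jstd :: "real^('n::finite + 'n)^('n + 'n)" where
  "Jstd = (\<chi> a b. case (a, b) of
             (Inl i, Inr j) \<Rightarrow> (if i = j then -1 else 0)
           | (Inr i, Inl j) \<Rightarrow> (if i = j then 1 else 0)
           | _ \<Rightarrow> 0)"

definition Ham :: "(real^'n \<Rightarrow> real) \<Rightarrow> real^('n + 'n) \<Rightarrow> real" where
  "Ham U z = (1/2) * (norm (vof z))^2 - U (yof z)"

definition Fmod :: "(real^'n \<Rightarrow> real) \<Rightarrow> (nat \<Rightarrow> real^'n \<Rightarrow> real^'n \<Rightarrow> real^'n)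
    \<Rightarrow> nat \<Rightarrow> real^('n + 'n) \<Rightarrow> real^('n + 'n)" where
  "Fmod U g i z = (if i = 0 then join (vof z) (grad U (yof z))
                   else join 0 (g i (yof z) (vof z)))"

definition closed_2form :: "(real^'m \<Rightarrow> real^'m^'m) \<Rightarrow> bool" where
  "closed_2form J \<longleftrightarrow>
     (\<forall>z. transpose (J z) = - J z) \<and>
     (\<forall>z a b c. pd (\<lambda>x. J x $ a $ b) c z + pd (\<lambda>x. J x $ b $ c) a z
               + pd (\<lambda>x. J x $ c $ a) b z = 0)"

end

theory Submission
  imports Defs "HOL-Library.Function_Algebras" "HOL-Computational_Algebra.Formal_Power_Series"
begin

lemma dirderiv_frechet:
  assumes "(F has_derivative F') (at z)"
  shows "dirderiv F z w = F' w"
proof -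
  have d1: "((\<lambda>t::real. z + t *\<^sub>R w) has_derivative (\<lambda>t. t *\<^sub>R w)) (at 0)"
    by (auto intro!: derivative_eq_intros)
  have d2: "(F has_derivative F') (at (z + 0 *\<^sub>R w))" using assms by simp
  have lin: "linear F'" using assms has_derivative_linear by blast
  have "((\<lambda>t::real. F (z + t *\<^sub>R w)) has_derivative (\<lambda>t. F' (t *\<^sub>R w))) (at 0)"
    using has_derivative_compose[OF d1 d2] by simp
  moreover have "(\<lambda>t. F' (t *\<^sub>R w)) = (\<lambda>t. t *\<^sub>R F' w)"
    using lin by (simp add: linear_scale)
  ultimately have "((\<lambda>t::real. F (z + t *\<^sub>R w)) has_vector_derivative F' w) (at 0)"
    unfolding has_vector_derivative_def by simp
  then show ?thesis unfolding dirderiv_def by (rule vector_derivative_at)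
qed

lemma Ck_Suc_D: "Ck (Suc k) F \<Longrightarrow> Ck k F"
proof (induction k arbitrary: F)
  case 0
  then show ?case by (auto intro: differentiable_imp_continuous_on)
next
  case (Suc k)
  then show ?case by auto
qed


lemma Ck_deriv:
  assumes "Ck (Suc k) F"
  shows "(F has_derivative (\<lambda>w. dirderiv F z w)) (at z)"
proof -
  have "F differentiable (at z)" using assms
    by (auto simp: differentiable_on_def)
  then obtain F' where F': "(F has_derivative F') (at z)" by (auto simp: differentiable_def)
  have "F' = (\<lambda>w. dirderiv F z w)" using dirderiv_frechet[OF F'] by auto
  then show ?thesis using F' by simp
qed

lemma smooth_deriv: "smooth F \<Longrightarrow> (F has_derivative (\<lambda>w. dirderiv F z w)) (at z)"
  unfolding smooth_def using Ck_deriv by blast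

lemma smooth_iff: "smooth F \<longleftrightarrow> F differentiable_on UNIV \<and> (\<forall>w. smooth (\<lambda>z. dirderiv F z w))"
proof
  assume "smooth F"
  then show "F differentiable_on UNIV \<and> (\<forall>w. smooth (\<lambda>z. dirderiv F z w))"
    unfolding smooth_def by (metis Ck.simps(2))
next
  assume a: "F differentiable_on UNIV \<and> (\<forall>w. smooth (\<lambda>z. dirderiv F z w))"
  show "smooth F" unfolding smooth_def
  proof
    fix k show "Ck k F" using a by (cases k) (auto simp: smooth_def intro: differentiable_imp_continuous_on)
  qed
qed

lemma smooth_dd: "smooth F \<Longrightarrow> smooth (\<lambda>z. dirderiv F z w)"
  using smooth_iff by blast

lemma smooth_pd: "smooth F \<Longrightarrow> smooth (pd F k)"
  unfolding pd_def[abs_def] using smooth_dd by blast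

lemma smooth_cont: "smooth F \<Longrightarrow> continuous_on UNIV F"
  unfolding smooth_def by (metis Ck.simps(1))

lemma Ck_const: "Ck k (\<lambda>z. c)"
proof (induction k arbitrary: c)
  case 0 then show ?case by simp
next
  case (Suc k)
  have e: "dirderiv (\<lambda>z. c) z w = 0" for z w
    by (rule dirderiv_frechet) (rule has_derivative_const)
  show ?case using Suc by (simp add: e)
qed

lemma Ck_add: "Ck k f \<Longrightarrow> Ck k g \<Longrightarrow> Ck k (\<lambda>z. f z + g z)"
proof (induction k arbitrary: f g)
  case 0 then show ?case by (auto intro: continuous_on_add)
next
  case (Suc k)
  have "(\<lambda>z. dirderiv (\<lambda>z. f z + g z) z w) = (\<lambda>z. dirderiv f z w + dirderiv g z w)" for w
    by (rule ext, rule dirderiv_frechet, rule has_derivative_add)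
       (use Suc.prems Ck_deriv in blast)+
  then show ?case using Suc
    by (auto intro: differentiable_on_add)
qed

lemma Ck_bilinear:
  assumes bl: "bounded_bilinear bp"
  shows "Ck k f \<Longrightarrow> Ck k g \<Longrightarrow> Ck k (\<lambda>z. bp (f z) (g z))"
proof (induction k arbitrary: f g)
  case 0 then show ?case
    using bounded_bilinear.continuous_on[OF bl] by auto
next
  case (Suc k)
  have "(\<lambda>z. dirderiv (\<lambda>z. bp (f z) (g z)) z w)
      = (\<lambda>z. bp (f z) (dirderiv g z w) + bp (dirderiv f z w) (g z))" for w
    by (rule ext, rule dirderiv_frechet, rule bounded_bilinear.FDERIV[OF bl])
       (use Suc.prems Ck_deriv in blast)+
  moreover have "(\<lambda>z. bp (f z) (g z)) differentiable_on UNIV"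
  proof -
    have "\<And>z. ((\<lambda>z. bp (f z) (g z)) has_derivative
        (\<lambda>h. bp (f z) (dirderiv g z h) + bp (dirderiv f z h) (g z))) (at z)"
      by (rule bounded_bilinear.FDERIV[OF bl]) (use Suc.prems Ck_deriv in blast)+
    then show ?thesis by (auto simp: differentiable_on_def differentiable_def)
  qed
  moreover have "Ck k f" "Ck k g" using Suc.prems Ck_Suc_D by blast+
  ultimately show ?case using Suc
    by (auto intro!: Ck_add)
qed

lemma Ck_linear_outer:
  assumes bl: "bounded_linear T"
  shows "Ck k f \<Longrightarrow> Ck k (\<lambda>z. T (f z))"
proof (induction k arbitrary: f)
  case 0 then show ?case
    using bounded_linear.continuous_on[OF bl] by auto
next
  case (Suc k)
  have d: "((\<lambda>z. T (f z)) has_derivative (\<lambda>h. T (dirderiv f z h))) (at z)" for z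
    by (rule bounded_linear.has_derivative[OF bl]) (use Suc.prems Ck_deriv in blast)
  have "(\<lambda>z. dirderiv (\<lambda>z. T (f z)) z w) = (\<lambda>z. T (dirderiv f z w))" for w
    by (rule ext, rule dirderiv_frechet, rule d)
  moreover have "(\<lambda>z. T (f z)) differentiable_on UNIV"
    using d by (auto simp: differentiable_on_def differentiable_def)
  ultimately show ?case using Suc by auto
qed

lemma Ck_linear_inner:
  assumes bl: "bounded_linear T"
  shows "Ck k f \<Longrightarrow> Ck k (\<lambda>z. f (T z))"
proof (induction k arbitrary: f)
  case 0 then show ?case
    using continuous_on_compose2[OF _ bounded_linear.continuous_on[OF bl continuous_on_id]]
    by (auto)
next
  case (Suc k)
  have d: "((\<lambda>z. f (T z)) has_derivative (\<lambda>h. dirderiv f (T z) (T h))) (at z)" for z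
    by (rule has_derivative_compose[OF bounded_linear_imp_has_derivative[OF bl]])
       (use Suc.prems Ck_deriv in blast)
  have "(\<lambda>z. dirderiv (\<lambda>z. f (T z)) z w) = (\<lambda>z. dirderiv f (T z) (T w))" for w
    by (rule ext, rule dirderiv_frechet, rule d)
  moreover have "(\<lambda>z. f (T z)) differentiable_on UNIV"
    using d by (auto simp: differentiable_on_def differentiable_def)
  ultimately show ?case using Suc by auto
qed

lemma Ck_id: "Ck k (\<lambda>z. z)"
proof (cases k)
  case 0 then show ?thesis by (simp add: continuous_on_id)
next
  case (Suc j)
  have e: "dirderiv (\<lambda>z. z) z w = w" for z w
    by (rule dirderiv_frechet) (rule has_derivative_ident)
  show ?thesis using Suc by (simp add: e Ck_const)
qed

lemma smooth_const[simp, intro]: "smooth (\<lambda>z. c)" unfolding smooth_def by (simp add: Ck_const)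
lemma smooth_id[intro]: "smooth (\<lambda>z. z)" unfolding smooth_def by (simp add: Ck_id)
lemma smooth_add[intro]: "smooth f \<Longrightarrow> smooth g \<Longrightarrow> smooth (\<lambda>z. f z + g z)"
  unfolding smooth_def by (simp add: Ck_add)
lemma smooth_bilinear: "bounded_bilinear bp \<Longrightarrow> smooth f \<Longrightarrow> smooth g \<Longrightarrow> smooth (\<lambda>z. bp (f z) (g z))"
  unfolding smooth_def by (simp add: Ck_bilinear)
lemma smooth_linear_outer: "bounded_linear T \<Longrightarrow> smooth f \<Longrightarrow> smooth (\<lambda>z. T (f z))"
  unfolding smooth_def by (simp add: Ck_linear_outer)
lemma smooth_linear_inner: "bounded_linear T \<Longrightarrow> smooth f \<Longrightarrow> smooth (\<lambda>z. f (T z))"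
  unfolding smooth_def by (simp add: Ck_linear_inner)
lemma smooth_linear: "bounded_linear T \<Longrightarrow> smooth T"
  using smooth_linear_outer[OF _ smooth_id] by auto

lemma smooth_mult[intro]: "smooth f \<Longrightarrow> smooth g \<Longrightarrow> smooth (\<lambda>z. (f z::real) * g z)"
  by (rule smooth_bilinear[OF bounded_bilinear_mult])
lemma smooth_scaleR[intro]: "smooth f \<Longrightarrow> smooth g \<Longrightarrow> smooth (\<lambda>z. f z *\<^sub>R g z)"
  by (rule smooth_bilinear[OF bounded_bilinear_scaleR])
lemma smooth_minus[intro]: "smooth f \<Longrightarrow> smooth (\<lambda>z. - f z)"
  by (rule smooth_linear_outer[OF bounded_linear_minus[OF bounded_linear_ident]])
lemma smooth_diff[intro]: "smooth f \<Longrightarrow> smooth g \<Longrightarrow> smooth (\<lambda>z. f z - g z)"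
  using smooth_add[of f "\<lambda>z. - g z"] smooth_minus[of g] by simp
lemma smooth_sum[intro]: "(\<And>i. i \<in> S \<Longrightarrow> smooth (f i)) \<Longrightarrow> smooth (\<lambda>z. \<Sum>i\<in>S. f i z)"
proof (induction S rule: infinite_finite_induct)
  case (insert x F) then show ?case
    using smooth_add[of "f x" "\<lambda>z. \<Sum>i\<in>F. f i z"] by simp
qed auto
lemma smooth_vec_nth[intro]: "smooth F \<Longrightarrow> smooth (\<lambda>z. F z $ i)"
  by (rule smooth_linear_outer[OF bounded_linear_vec_nth])

lemma vec_lambda_sum_axis: "(\<chi> i. f i) = (\<Sum>i\<in>UNIV. f i *\<^sub>R axis i (1::real))"
  by (simp add: vec_eq_iff axis_def sum_component if_distrib cong: if_cong)

lemma smooth_vec_lambda[intro]: "smooth (\<lambda>z. \<chi> i. f i z :: real^'k)" if "\<And>i. smooth (f i)"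
proof -
  have "(\<lambda>z. \<chi> i. f i z) = (\<lambda>z. \<Sum>i\<in>UNIV. f i z *\<^sub>R axis i (1::real))"
    by (rule ext) (rule vec_lambda_sum_axis)
  then show ?thesis by (auto intro!: smooth_sum smooth_scaleR that)
qed

lemma vec_sum_axis: "(x::real^'m) = (\<Sum>i\<in>UNIV. (x $ i) *\<^sub>R axis i 1)"
  using vec_lambda_sum_axis[of "\<lambda>i. x $ i"] by simp

lemma dirderiv_linear_dir:
  assumes "(F has_derivative F') (at z)"
  shows "dirderiv F z (w::real^'m) = (\<Sum>i\<in>UNIV. (w $ i) *\<^sub>R pd F i z)"
proof -
  have lin: "linear F'" using assms has_derivative_linear by blast
  have "dirderiv F z w = F' w" by (rule dirderiv_frechet[OF assms])
  also have "\<dots> = F' (\<Sum>i\<in>UNIV. (w $ i) *\<^sub>R axis i 1)" by (subst vec_sum_axis[of w]) simp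
  also have "\<dots> = (\<Sum>i\<in>UNIV. (w $ i) *\<^sub>R F' (axis i 1))"
    using lin by (simp add: linear_sum linear_scale)
  also have "\<dots> = (\<Sum>i\<in>UNIV. (w $ i) *\<^sub>R pd F i z)"
    unfolding pd_def using dirderiv_frechet[OF assms] by simp
  finally show ?thesis .
qed

lemma smooth_dd_field:
  assumes "smooth F" "smooth W"
  shows "smooth (\<lambda>z. dirderiv F z (W z :: real^'m))"
proof -
  have "(\<lambda>z. dirderiv F z (W z)) = (\<lambda>z. \<Sum>i\<in>UNIV. (W z $ i) *\<^sub>R pd F i z)"
    using dirderiv_linear_dir[OF smooth_deriv[OF assms(1)]] by auto
  then show ?thesis using assms by (auto intro!: smooth_sum smooth_scaleR smooth_pd)
qed


lemma dd_scale: "smooth F \<Longrightarrow> dirderiv F p (h *\<^sub>R w) = h *\<^sub>R dirderiv F p w"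
  using smooth_deriv[of F p] has_derivative_linear linear_scale by blast

lemma mvt_aux:
  fixes G :: "real \<Rightarrow> real"
  assumes "s > 0" and "\<And>t. (G has_derivative (\<lambda>h. h * G' t)) (at t)"
  shows "\<exists>t. 0 < t \<and> t < s \<and> G s - G 0 = s * G' t"
proof -
  have "\<exists>x\<in>{0<..<s}. G s - G 0 = (\<lambda>h. h * G' x) (s - 0)"
    by (rule mvt_simple[OF assms(1)]) (use assms(2) has_derivative_at_withinI in blast)
  then show ?thesis by auto
qed

lemma mvt2:
  fixes F :: "'a::real_normed_vector \<Rightarrow> real"
  assumes sm: "smooth F" and s: "s > 0"
  shows "\<exists>x. norm (x - z) \<le> s * (norm w + norm u) \<and>
    F (z + s *\<^sub>R w + s *\<^sub>R u) - F (z + s *\<^sub>R w) - F (z + s *\<^sub>R u) + F z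
      = s * s * dirderiv (\<lambda>x. dirderiv F x w) x u"
proof -
  define Q where "Q x = dirderiv F x w" for x
  have smQ: "smooth Q" unfolding Q_def[abs_def] using sm smooth_dd by blast
  define G where "G t = F (z + t *\<^sub>R w + s *\<^sub>R u) - F (z + t *\<^sub>R w)" for t
  have dG: "(G has_derivative (\<lambda>h. h * (Q (z + t *\<^sub>R w + s *\<^sub>R u) - Q (z + t *\<^sub>R w)))) (at t)" for t
  proof -
    have d1: "((\<lambda>t. z + t *\<^sub>R w + s *\<^sub>R u) has_derivative (\<lambda>h. h *\<^sub>R w)) (at t)"
      by (auto intro!: derivative_eq_intros)
    have d2: "((\<lambda>t. z + t *\<^sub>R w) has_derivative (\<lambda>h. h *\<^sub>R w)) (at t)"
      by (auto intro!: derivative_eq_intros)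
    have "(G has_derivative (\<lambda>h. dirderiv F (z + t *\<^sub>R w + s *\<^sub>R u) (h *\<^sub>R w)
             - dirderiv F (z + t *\<^sub>R w) (h *\<^sub>R w))) (at t)"
      unfolding G_def[abs_def]
      by (intro has_derivative_diff has_derivative_compose[OF d1 smooth_deriv[OF sm]]
          has_derivative_compose[OF d2 smooth_deriv[OF sm]])
    then show ?thesis by (simp add: dd_scale[OF sm] Q_def right_diff_distrib)
  qed
  obtain t where t: "0 < t" "t < s" and Gt: "G s - G 0 = s * (Q (z + t *\<^sub>R w + s *\<^sub>R u) - Q (z + t *\<^sub>R w))"
    using mvt_aux[OF s dG] by blast
  define K where "K r = Q (z + t *\<^sub>R w + r *\<^sub>R u)" for r
  have dK: "(K has_derivative (\<lambda>h. h * dirderiv Q (z + t *\<^sub>R w + r *\<^sub>R u) u)) (at r)" for r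
  proof -
    have d1: "((\<lambda>r. z + t *\<^sub>R w + r *\<^sub>R u) has_derivative (\<lambda>h. h *\<^sub>R u)) (at r)"
      by (auto intro!: derivative_eq_intros)
    show ?thesis unfolding K_def[abs_def]
      using has_derivative_compose[OF d1 smooth_deriv[OF smQ]] by (simp add: dd_scale[OF smQ])
  qed
  obtain r where r: "0 < r" "r < s" and Kr: "K s - K 0 = s * dirderiv Q (z + t *\<^sub>R w + r *\<^sub>R u) u"
    using mvt_aux[OF s dK] by blast
  define x where "x = z + t *\<^sub>R w + r *\<^sub>R u"
  have "x - z = t *\<^sub>R w + r *\<^sub>R u" by (simp add: x_def)
  then have "norm (x - z) \<le> norm (t *\<^sub>R w) + norm (r *\<^sub>R u)"
    by (simp only: norm_triangle_ineq)
  also have "\<dots> = t * norm w + r * norm u" using t r by simp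
  also have "\<dots> \<le> s * norm w + s * norm u" using t r
    by (intro add_mono mult_right_mono) auto
  finally have nx: "norm (x - z) \<le> s * (norm w + norm u)" by (simp add: algebra_simps)
  have "F (z + s *\<^sub>R w + s *\<^sub>R u) - F (z + s *\<^sub>R w) - F (z + s *\<^sub>R u) + F z = G s - G 0"
    unfolding G_def by simp
  also have "\<dots> = s * (K s - K 0)" unfolding Gt K_def by simp
  also have "\<dots> = s * s * dirderiv Q x u" unfolding Kr x_def by simp
  finally show ?thesis using nx unfolding Q_def[abs_def] by blast
qed

lemma schwarz:
  fixes F :: "'a::real_normed_vector \<Rightarrow> real"
  assumes sm: "smooth F"
  shows "dirderiv (\<lambda>x. dirderiv F x w) z u = dirderiv (\<lambda>x. dirderiv F x u) z w"
proof (rule ccontr)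
  define A where "A x = dirderiv (\<lambda>x. dirderiv F x w) x u" for x
  define B where "B x = dirderiv (\<lambda>x. dirderiv F x u) x w" for x
  assume ne: "dirderiv (\<lambda>x. dirderiv F x w) z u \<noteq> dirderiv (\<lambda>x. dirderiv F x u) z w"
  then have ne': "A z \<noteq> B z" unfolding A_def B_def .
  define e where "e = \<bar>A z - B z\<bar> / 2"
  have e: "e > 0" using ne' unfolding e_def by simp
  have smA: "smooth A" unfolding A_def[abs_def] using sm smooth_dd by blast
  have smB: "smooth B" unfolding B_def[abs_def] using sm smooth_dd by blast
  have cA: "continuous (at z) A" using smooth_cont[OF smA]
    by (simp add: continuous_on_eq_continuous_at)
  have cB: "continuous (at z) B" using smooth_cont[OF smB]
    by (simp add: continuous_on_eq_continuous_at)
  obtain dA where dA: "dA > 0" "\<And>x. dist x z < dA \<Longrightarrow> dist (A x) (A z) < e"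
    using cA e unfolding continuous_at_eps_delta by blast
  obtain dB where dB: "dB > 0" "\<And>x. dist x z < dB \<Longrightarrow> dist (B x) (B z) < e"
    using cB e unfolding continuous_at_eps_delta by blast
  define s where "s = min dA dB / (2 * (norm w + norm u + 1))"
  have s: "s > 0" unfolding s_def using dA dB by (auto intro!: divide_pos_pos add_nonneg_pos)
  have sbound: "s * (norm w + norm u) < min dA dB"
  proof -
    have "s * (norm w + norm u) \<le> s * (norm w + norm u + 1)" using s by simp
    also have "\<dots> = min dA dB / 2" unfolding s_def
    proof -
      have "X > 0 \<Longrightarrow> m / (2*X) * X = m/2" for m X :: real by simp
      moreover have "norm w + norm u + 1 > 0" by (simp add: add_nonneg_pos)
      ultimately show "min dA dB / (2 * (norm w + norm u + 1)) * (norm w + norm u + 1) = min dA dB / 2"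
        by blast
    qed
    also have "\<dots> < min dA dB" using dA(1) dB(1) by (simp add: min_def)
    finally show ?thesis .
  qed
  obtain x1 where x1: "norm (x1 - z) \<le> s * (norm w + norm u)"
    "F (z + s *\<^sub>R w + s *\<^sub>R u) - F (z + s *\<^sub>R w) - F (z + s *\<^sub>R u) + F z = s * s * A x1"
    using mvt2[OF sm s, of z w u] unfolding A_def by blast
  obtain x2 where x2: "norm (x2 - z) \<le> s * (norm u + norm w)"
    "F (z + s *\<^sub>R u + s *\<^sub>R w) - F (z + s *\<^sub>R u) - F (z + s *\<^sub>R w) + F z = s * s * B x2"
    using mvt2[OF sm s, of z u w] unfolding B_def by blast
  have zz: "z + s *\<^sub>R u + s *\<^sub>R w = z + s *\<^sub>R w + s *\<^sub>R u" by (simp add: algebra_simps)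
  have "F (z + s *\<^sub>R w + s *\<^sub>R u) - F (z + s *\<^sub>R u) - F (z + s *\<^sub>R w) + F z = s * s * B x2"
    using x2(2) unfolding zz .
  then have "s * s * A x1 = s * s * B x2" using x1(2) by linarith
  then have eq: "A x1 = B x2" using s by simp
  have "dist x1 z < dA" using x1(1) sbound by (simp add: dist_norm)
  then have a1: "\<bar>A x1 - A z\<bar> < e" using dA(2) by (simp add: dist_real_def)
  have "dist x2 z < dB" using x2(1) sbound by (simp add: dist_norm add.commute)
  then have b1: "\<bar>B x2 - B z\<bar> < e" using dB(2) by (simp add: dist_real_def)
  have "\<bar>A z - B z\<bar> < 2 * e" using a1 b1 eq by linarith
  then show False unfolding e_def by simp
qed


lemma sum_apply_fun: "(\<Sum>i\<in>S. f i) x = (\<Sum>i\<in>S. f i x)"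
  by (induction S rule: infinite_finite_induct) auto

lemma smooth_fadd[intro]: "smooth f \<Longrightarrow> smooth g \<Longrightarrow> smooth (f + g)"
  unfolding plus_fun_def by (rule smooth_add)
lemma smooth_fmult[intro]: "smooth f \<Longrightarrow> smooth g \<Longrightarrow> smooth (f * (g :: _ \<Rightarrow> real))"
  unfolding times_fun_def by (rule smooth_mult)
lemma smooth_fminus[intro]: "smooth f \<Longrightarrow> smooth (- f)"
  unfolding fun_Compl_def by (rule smooth_minus)
lemma smooth_fdiff[intro]: "smooth f \<Longrightarrow> smooth g \<Longrightarrow> smooth (f - g)"
  unfolding fun_diff_def by (rule smooth_diff)
lemma smooth_fsum[intro]: "(\<And>i. i \<in> S \<Longrightarrow> smooth (f i)) \<Longrightarrow> smooth (\<Sum>i\<in>S. f i)"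
proof -
  assume "\<And>i. i \<in> S \<Longrightarrow> smooth (f i)"
  then have "smooth (\<lambda>x. \<Sum>i\<in>S. f i x)" by (rule smooth_sum)
  then show ?thesis by (simp add: sum_apply_fun[abs_def])
qed
lemma smooth_fzero[intro]: "smooth (0 :: _ \<Rightarrow> real)"
  unfolding zero_fun_def by (rule smooth_const)
lemma smooth_fone[intro]: "smooth (1 :: _ \<Rightarrow> real)"
  unfolding one_fun_def by (rule smooth_const)

lemma pd_deriv: "(F has_derivative F') (at z) \<Longrightarrow> pd F k z = F' (axis k 1)"
  unfolding pd_def by (rule dirderiv_frechet)

lemma pd_add: "smooth f \<Longrightarrow> smooth g \<Longrightarrow> pd (f + g) k = pd f k + pd g k"
proof (rule ext)
  fix z assume f: "smooth f" and g: "smooth g"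
  have "((\<lambda>z. f z + g z) has_derivative (\<lambda>w. dirderiv f z w + dirderiv g z w)) (at z)"
    by (rule has_derivative_add[OF smooth_deriv[OF f] smooth_deriv[OF g]])
  then have "pd (\<lambda>z. f z + g z) k z = dirderiv f z (axis k 1) + dirderiv g z (axis k 1)"
    by (rule pd_deriv)
  then show "pd (f + g) k z = (pd f k + pd g k) z"
    unfolding plus_fun_def by (simp add: pd_def)
qed

lemma pd_fmult: "smooth f \<Longrightarrow> smooth g \<Longrightarrow> pd (f * g) k = pd f k * g + f * (pd g k :: _ \<Rightarrow> real)"
proof (rule ext)
  fix z assume f: "smooth f" and g: "smooth g"
  have "((\<lambda>z. f z * g z) has_derivative (\<lambda>w. f z * dirderiv g z w + dirderiv f z w * g z)) (at z)"
    by (rule has_derivative_mult[OF smooth_deriv[OF f] smooth_deriv[OF g]])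
  then have "pd (\<lambda>z. f z * g z) k z = f z * dirderiv g z (axis k 1) + dirderiv f z (axis k 1) * g z"
    by (rule pd_deriv)
  then show "pd (f * g) k z = (pd f k * g + f * pd g k) z"
    unfolding times_fun_def plus_fun_def by (simp add: pd_def)
qed

lemma pd_fconst: "pd (\<lambda>z. c) k = (\<lambda>z. 0)"
  by (rule ext, rule pd_deriv[OF has_derivative_const])

lemma pd_fminus: "smooth f \<Longrightarrow> pd (- f) k = - pd f k"
proof (rule ext)
  fix z assume f: "smooth f"
  have "((\<lambda>z. - f z) has_derivative (\<lambda>w. - dirderiv f z w)) (at z)"
    by (rule has_derivative_minus[OF smooth_deriv[OF f]])
  then have "pd (\<lambda>z. - f z) k z = - dirderiv f z (axis k 1)"
    by (rule pd_deriv)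
  then show "pd (- f) k z = (- pd f k) z"
    unfolding fun_Compl_def by (simp add: pd_def)
qed

lemma pd_fsum: "(\<And>i. i \<in> S \<Longrightarrow> smooth (f i)) \<Longrightarrow> pd (\<Sum>i\<in>S. f i) k = (\<Sum>i\<in>S. pd (f i) k)"
proof (induction S rule: infinite_finite_induct)
  case (infinite S) then show ?case by (simp add: pd_fconst zero_fun_def)
next
  case empty then show ?case by (simp add: pd_fconst zero_fun_def)
next
  case (insert x F)
  have "pd (\<Sum>i\<in>insert x F. f i) k = pd (f x + sum f F) k"
    by (subst sum.insert[OF insert(1,2)]) (rule refl)
  also have "\<dots> = pd (f x) k + pd (sum f F) k"
    using insert by (intro pd_add smooth_fsum) auto
  also have "\<dots> = pd (f x) k + (\<Sum>i\<in>F. pd (f i) k)"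
    using insert.IH insert.prems by simp
  also have "\<dots> = (\<Sum>i\<in>insert x F. pd (f i) k)"
    by (subst sum.insert[OF insert(1,2)]) (rule refl)
  finally show ?case .
qed

section \<open>Formal power series with smooth function coefficients\<close>

type_synonym 'm sf = "(real^'m \<Rightarrow> real) fps"

definition smf :: "'m::finite sf \<Rightarrow> bool" where
  "smf p \<longleftrightarrow> (\<forall>i. smooth (fps_nth p i))"

definition pdf :: "'m::finite \<Rightarrow> 'm sf \<Rightarrow> 'm sf" where
  "pdf b p = Abs_fps (\<lambda>i. pd (fps_nth p i) b)"

definition cst :: "real \<Rightarrow> 'm::finite sf" where
  "cst r = fps_const (\<lambda>z. r)"

lemma smf_add[simp, intro]: "smf p \<Longrightarrow> smf q \<Longrightarrow> smf (p + q)" unfolding smf_def by auto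
lemma smf_minus[simp, intro]: "smf p \<Longrightarrow> smf (- p)" unfolding smf_def by auto
lemma smf_diff[simp, intro]: "smf p \<Longrightarrow> smf q \<Longrightarrow> smf (p - q)" unfolding smf_def by auto
lemma smf_mult[simp, intro]: "smf p \<Longrightarrow> smf q \<Longrightarrow> smf (p * q)"
  unfolding smf_def fps_mult_nth by (auto intro!: smooth_fsum smooth_fmult)
lemma smf_sum[simp, intro]: "(\<And>i. i \<in> S \<Longrightarrow> smf (f i)) \<Longrightarrow> smf (\<Sum>i\<in>S. f i)"
  unfolding smf_def fps_sum_nth by (auto intro!: smooth_fsum)
lemma smf_zero[simp, intro]: "smf 0" unfolding smf_def by auto
lemma smf_one[simp, intro]: "smf 1" unfolding smf_def by (auto simp: fps_one_nth)
lemma smf_const[simp, intro]: "smooth c \<Longrightarrow> smf (fps_const c)" unfolding smf_def by auto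
lemma smf_cst[simp, intro]: "smf (cst r)" unfolding cst_def by (auto intro!: smf_const)
lemma smf_Xpow[simp, intro]: "smf (fps_X ^ j)" unfolding smf_def by auto
lemma smf_pdf[simp, intro]: "smf p \<Longrightarrow> smf (pdf b p)" unfolding smf_def pdf_def by (auto intro: smooth_pd)

lemma pdf_add: "smf p \<Longrightarrow> smf q \<Longrightarrow> pdf b (p + q) = pdf b p + pdf b q"
  unfolding smf_def pdf_def by (auto simp: fps_eq_iff pd_add)
lemma pdf_minus: "smf p \<Longrightarrow> pdf b (- p) = - pdf b p"
  unfolding smf_def pdf_def by (auto simp: fps_eq_iff pd_fminus)
lemma pdf_diff: "smf p \<Longrightarrow> smf q \<Longrightarrow> pdf b (p - q) = pdf b p - pdf b q"
  using pdf_add[of p "-q" b] pdf_minus[of q b] by (simp add: smf_minus)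
lemma pdf_sum: "(\<And>i. i \<in> S \<Longrightarrow> smf (f i)) \<Longrightarrow> pdf b (\<Sum>i\<in>S. f i) = (\<Sum>i\<in>S. pdf b (f i))"
  unfolding smf_def pdf_def by (auto simp: fps_eq_iff fps_sum_nth pd_fsum)
lemma pdf_mult: "smf p \<Longrightarrow> smf q \<Longrightarrow> pdf b (p * q) = pdf b p * q + p * pdf b q"
proof -
  assume p: "smf p" and q: "smf q"
  show ?thesis
  proof (rule fps_ext)
    fix n
    have "fps_nth (pdf b (p * q)) n = pd (\<Sum>i=0..n. fps_nth p i * fps_nth q (n - i)) b"
      unfolding pdf_def by (simp add: fps_mult_nth)
    also have "\<dots> = (\<Sum>i=0..n. pd (fps_nth p i * fps_nth q (n - i)) b)"
      using p q unfolding smf_def by (intro pd_fsum smooth_fmult) auto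
    also have "\<dots> = (\<Sum>i=0..n. pd (fps_nth p i) b * fps_nth q (n - i) + fps_nth p i * pd (fps_nth q (n - i)) b)"
      using p q unfolding smf_def by (intro sum.cong refl pd_fmult) auto
    also have "\<dots> = fps_nth (pdf b p * q + p * pdf b q) n"
      unfolding pdf_def by (simp add: fps_mult_nth sum.distrib)
    finally show "fps_nth (pdf b (p * q)) n = fps_nth (pdf b p * q + p * pdf b q) n" .
  qed
qed
lemma pdf_zero[simp]: "pdf b 0 = 0"
  unfolding pdf_def by (simp add: fps_eq_iff zero_fun_def pd_fconst)
lemma pdf_constcoef: "(\<And>i. \<exists>c. fps_nth p i = (\<lambda>z. c)) \<Longrightarrow> pdf b p = 0"
  unfolding pdf_def by (auto simp: fps_eq_iff zero_fun_def) (metis pd_fconst)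
lemma pdf_cst[simp]: "pdf b (cst r) = 0"
  by (rule pdf_constcoef) (auto simp: cst_def zero_fun_def)
lemma pdf_Xpow[simp]: "pdf b (fps_X ^ j) = 0"
  by (rule pdf_constcoef) (auto simp: zero_fun_def one_fun_def)
lemma pdf_const_mult: "(\<And>i. \<exists>c. fps_nth p i = (\<lambda>z. c)) \<Longrightarrow> smf q \<Longrightarrow> pdf b (p * q) = p * pdf b q"
proof -
  assume c: "\<And>i. \<exists>c. fps_nth p i = (\<lambda>z. c)" and q: "smf q"
  have "smf p" unfolding smf_def using c by (metis smooth_const)
  then show ?thesis using pdf_mult[of p q b] pdf_constcoef[OF c] q by simp
qed

lemma pdf_comm: "smf p \<Longrightarrow> pdf a (pdf b p) = pdf b (pdf a p)"
  unfolding smf_def pdf_def pd_def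
  by (auto simp: fps_eq_iff intro!: ext schwarz)


lemma cst_mult: "cst (a * b) = cst a * cst b" unfolding cst_def by (simp add: times_fun_def)
lemma cst_add: "cst (a + b) = cst a + cst b" unfolding cst_def by (simp add: plus_fun_def)
lemma cst_minus: "cst (- a) = - cst a" unfolding cst_def by (simp add: fun_Compl_def)
lemma cst_one[simp]: "cst 1 = 1" unfolding cst_def by (simp add: one_fun_def)
lemma cst_zero[simp]: "cst 0 = 0" unfolding cst_def by (simp add: zero_fun_def)

lemma smooth_yof[intro]: "smooth (yof :: real^('n::finite + 'n) \<Rightarrow> real^'n)"
  unfolding yof_def[abs_def] by (intro smooth_vec_lambda smooth_vec_nth smooth_id)
lemma smooth_vof[intro]: "smooth (vof :: real^('n::finite + 'n) \<Rightarrow> real^'n)"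
  unfolding vof_def[abs_def] by (intro smooth_vec_lambda smooth_vec_nth smooth_id)
lemma smooth_join[intro]: "smooth (\<lambda>z. join (A z) (B z))" if "smooth A" "smooth B"
  unfolding join_def
proof (intro smooth_vec_lambda)
  fix i
  show "smooth (\<lambda>z. case i of Inl x \<Rightarrow> A z $ x | Inr x \<Rightarrow> B z $ x)"
    using that by (cases i) (auto intro: smooth_vec_nth)
qed

locale mdq =
  fixes f :: "nat \<Rightarrow> real^'n::finite \<Rightarrow> real^'n \<Rightarrow> real^'n"
  assumes f_sm: "\<And>i. smooth (\<lambda>z::real^('n + 'n). f i (yof z) (vof z))"
begin

definition Fv :: "nat \<Rightarrow> real^('n + 'n) \<Rightarrow> real^('n + 'n)" where
  "Fv i z = join (if i = 0 then vof z else 0) (f i (yof z) (vof z))"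

definition Fb :: "('n + 'n) \<Rightarrow> ('n + 'n) sf" where
  "Fb b = Abs_fps (\<lambda>i z. Fv i z $ b)"

definition D :: "('n + 'n) sf \<Rightarrow> ('n + 'n) sf" where
  "D p = (\<Sum>b\<in>UNIV. Fb b * pdf b p)"

definition Lie :: "(('n + 'n) \<Rightarrow> ('n + 'n) sf) \<Rightarrow> ('n + 'n) \<Rightarrow> ('n + 'n) sf" where
  "Lie \<alpha> a = D (\<alpha> a) + (\<Sum>b\<in>UNIV. \<alpha> b * pdf a (Fb b))"

lemma smooth_Fv: "smooth (Fv i)"
  unfolding Fv_def[abs_def] using f_sm[of i] by (cases "i = 0") (auto intro!: smooth_join)

lemma smf_Fb[simp, intro]: "smf (Fb b)"
  unfolding smf_def Fb_def using smooth_Fv by (auto intro: smooth_vec_nth)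

lemma smf_D[simp, intro]: "smf p \<Longrightarrow> smf (D p)"
  unfolding D_def by (auto intro!: smf_sum smf_mult smf_pdf)

lemma smf_Dpow[simp, intro]: "smf p \<Longrightarrow> smf ((D ^^ k) p)"
  by (induction k) auto

lemma D_add: "smf p \<Longrightarrow> smf q \<Longrightarrow> D (p + q) = D p + D q"
  unfolding D_def by (simp add: pdf_add distrib_left sum.distrib)
lemma D_minus: "smf p \<Longrightarrow> D (- p) = - D p"
  unfolding D_def by (simp add: pdf_minus sum_negf)
lemma D_diff: "smf p \<Longrightarrow> smf q \<Longrightarrow> D (p - q) = D p - D q"
  unfolding D_def by (simp add: pdf_diff right_diff_distrib sum_subtractf)
lemma D_sum: "(\<And>i. i \<in> S \<Longrightarrow> smf (g i)) \<Longrightarrow> D (\<Sum>i\<in>S. g i) = (\<Sum>i\<in>S. D (g i))"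
  unfolding D_def by (simp add: pdf_sum sum_distrib_left sum.swap[of _ UNIV S])
lemma D_mult: "smf p \<Longrightarrow> smf q \<Longrightarrow> D (p * q) = D p * q + p * D q"
  unfolding D_def by (simp add: pdf_mult algebra_simps sum.distrib sum_distrib_left sum_distrib_right)
lemma D_zero[simp]: "D 0 = 0" unfolding D_def by simp
lemma D_cst[simp]: "D (cst r) = 0" unfolding D_def by simp
lemma D_Xpow[simp]: "D (fps_X ^ j) = 0" unfolding D_def by simp
lemma D_cst_mult: "smf p \<Longrightarrow> D (cst r * p) = cst r * D p"
  by (simp add: D_mult smf_cst)
lemma D_Xpow_mult: "smf p \<Longrightarrow> D (fps_X ^ j * p) = fps_X ^ j * D p"
  by (simp add: D_mult smf_Xpow)
lemma Dpow_cst_mult: "smf p \<Longrightarrow> (D ^^ k) (cst r * p) = cst r * (D ^^ k) p"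
  by (induction k) (auto simp: D_cst_mult[OF smf_Dpow])
lemma Dpow_sum: "(\<And>i. i \<in> S \<Longrightarrow> smf (g i)) \<Longrightarrow> (D ^^ k) (\<Sum>i\<in>S. g i) = (\<Sum>i\<in>S. (D ^^ k) (g i))"
  by (induction k) (auto simp: D_sum smf_Dpow)

lemma Lie_add: "(\<And>a. smf (\<alpha> a)) \<Longrightarrow> (\<And>a. smf (\<beta> a)) \<Longrightarrow>
    Lie (\<lambda>a. \<alpha> a + \<beta> a) a = Lie \<alpha> a + Lie \<beta> a"
  unfolding Lie_def by (simp add: D_add algebra_simps sum.distrib)
lemma Lie_minus: "(\<And>a. smf (\<alpha> a)) \<Longrightarrow> Lie (\<lambda>a. - \<alpha> a) a = - Lie \<alpha> a"
  unfolding Lie_def by (simp add: D_minus sum_negf)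
lemma Lie_diff: "(\<And>a. smf (\<alpha> a)) \<Longrightarrow> (\<And>a. smf (\<beta> a)) \<Longrightarrow>
    Lie (\<lambda>a. \<alpha> a - \<beta> a) a = Lie \<alpha> a - Lie \<beta> a"
  unfolding Lie_def by (simp add: D_diff algebra_simps sum_subtractf)
lemma Lie_sum: "(\<And>i a. i \<in> S \<Longrightarrow> smf (\<alpha> i a)) \<Longrightarrow>
    Lie (\<lambda>a. \<Sum>i\<in>S. \<alpha> i a) a = (\<Sum>i\<in>S. Lie (\<alpha> i) a)"
  unfolding Lie_def by (simp add: D_sum sum.distrib sum_distrib_right sum.swap[of _ UNIV S])
lemma Lie_mult: "smf p \<Longrightarrow> (\<And>a. smf (\<alpha> a)) \<Longrightarrow>
    Lie (\<lambda>a. p * \<alpha> a) a = D p * \<alpha> a + p * Lie \<alpha> a"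
  unfolding Lie_def by (simp add: D_mult algebra_simps sum_distrib_left)
lemma Lie_d: "smf p \<Longrightarrow> Lie (\<lambda>a. pdf a p) a = pdf a (D p)"
proof -
  assume p: "smf p"
  have "pdf a (D p) = (\<Sum>b\<in>UNIV. pdf a (Fb b) * pdf b p + Fb b * pdf a (pdf b p))"
    unfolding D_def using p by (simp add: pdf_sum pdf_mult smf_mult smf_pdf smf_Fb)
  also have "\<dots> = (\<Sum>b\<in>UNIV. pdf a (Fb b) * pdf b p + Fb b * pdf b (pdf a p))"
    using p by (simp add: pdf_comm)
  also have "\<dots> = Lie (\<lambda>a. pdf a p) a"
    unfolding Lie_def D_def by (simp add: sum.distrib algebra_simps)
  finally show ?thesis by simp
qed

lemma IBP:
  assumes u: "smf u" and q: "smf q"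
  shows "u * pdf a ((D ^^ k) q) =
     Lie (\<lambda>a. \<Sum>r<k. cst ((-1) ^ r) * (D ^^ r) u * pdf a ((D ^^ (k - 1 - r)) q)) a
     + cst ((-1) ^ k) * (D ^^ k) u * pdf a q"
  using u
proof (induction k arbitrary: u a)
  case 0 then show ?case by (simp add: Lie_def)
next
  case (Suc k)
  note u = Suc.prems
  have smq: "smf ((D ^^ j) q)" for j using q by auto
  define \<Theta> where "\<Theta> v a = (\<Sum>r<k. cst ((-1) ^ r) * (D ^^ r) v * pdf a ((D ^^ (k - 1 - r)) q))" for v a
  have smT: "smf v \<Longrightarrow> smf (\<Theta> v a)" for v a
    unfolding \<Theta>_def by (intro smf_sum smf_mult smf_cst smf_Dpow smf_pdf smq) auto
  have IH: "D u * pdf a ((D ^^ k) q) = Lie (\<Theta> (D u)) a + cst ((-1) ^ k) * (D ^^ k) (D u) * pdf a q"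
    using Suc.IH[of "D u" a] u unfolding \<Theta>_def by (auto simp: smf_D)
  have "u * pdf a ((D ^^ Suc k) q) = u * Lie (\<lambda>a. pdf a ((D ^^ k) q)) a"
    using smq by (simp add: Lie_d)
  also have "\<dots> = Lie (\<lambda>a. u * pdf a ((D ^^ k) q)) a - D u * pdf a ((D ^^ k) q)"
    using Lie_mult[of u "\<lambda>a. pdf a ((D ^^ k) q)" a] u smq by (simp add: smf_pdf)
  also have "\<dots> = Lie (\<lambda>a. u * pdf a ((D ^^ k) q)) a - Lie (\<Theta> (D u)) a
      - cst ((-1) ^ k) * (D ^^ k) (D u) * pdf a q"
    unfolding IH by simp
  also have "\<dots> = Lie (\<lambda>a. u * pdf a ((D ^^ k) q) - \<Theta> (D u) a) a
      + cst ((-1) ^ Suc k) * (D ^^ Suc k) u * pdf a q"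
  proof -
    have "Lie (\<lambda>a. u * pdf a ((D ^^ k) q) - \<Theta> (D u) a) a
        = Lie (\<lambda>a. u * pdf a ((D ^^ k) q)) a - Lie (\<Theta> (D u)) a"
      by (rule Lie_diff) (use u smq smT smf_D in auto)
    moreover have "(D ^^ k) (D u) = (D ^^ Suc k) u" by (simp add: funpow_Suc_right del: funpow.simps)
    moreover have "cst ((-1) ^ Suc k) = - cst ((-1) ^ k)" by (simp add: cst_minus)
    ultimately show ?thesis by (simp add: cst_minus)
  qed
  also have "(\<lambda>a. u * pdf a ((D ^^ k) q) - \<Theta> (D u) a)
      = (\<lambda>a. \<Sum>r<Suc k. cst ((-1) ^ r) * (D ^^ r) u * pdf a ((D ^^ (Suc k - 1 - r)) q))"
  proof (rule ext)
    fix a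
    have "(\<Sum>r<Suc k. cst ((-1) ^ r) * (D ^^ r) u * pdf a ((D ^^ (Suc k - 1 - r)) q))
      = u * pdf a ((D ^^ k) q) + (\<Sum>r<k. cst ((-1) ^ Suc r) * (D ^^ Suc r) u * pdf a ((D ^^ (k - 1 - r)) q))"
      by (subst sum.lessThan_Suc_shift) simp
    also have "\<dots> = u * pdf a ((D ^^ k) q) - \<Theta> (D u) a"
      unfolding \<Theta>_def
      by (simp add: cst_minus sum_negf funpow_Suc_right del: funpow.simps)
    finally show "u * pdf a ((D ^^ k) q) - \<Theta> (D u) a
      = (\<Sum>r<Suc k. cst ((-1) ^ r) * (D ^^ r) u * pdf a ((D ^^ (Suc k - 1 - r)) q))" by simp
  qed
  finally show ?case .
qed

end


lemma linear_yof: "linear (yof :: real^('n::finite + 'n) \<Rightarrow> real^'n)"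
  by (auto simp: linear_iff yof_def vec_eq_iff)
lemma linear_vof: "linear (vof :: real^('n::finite + 'n) \<Rightarrow> real^'n)"
  by (auto simp: linear_iff vof_def vec_eq_iff)
lemma bl_yof: "bounded_linear (yof :: real^('n::finite + 'n) \<Rightarrow> real^'n)"
  using linear_yof linear_conv_bounded_linear by blast
lemma bl_vof: "bounded_linear (vof :: real^('n::finite + 'n) \<Rightarrow> real^'n)"
  using linear_vof linear_conv_bounded_linear by blast

lemma pdf_fps_const: "smooth \<phi> \<Longrightarrow> pdf a (fps_const \<phi>) = fps_const (pd \<phi> a)"
  unfolding pdf_def by (auto simp: fps_eq_iff zero_fun_def pd_fconst)

lemma pd_coord: "pd (\<lambda>z::real^'m. z $ b) a = (\<lambda>z. if a = b then 1 else 0)"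
proof (rule ext)
  fix z :: "real^'m"
  have "((\<lambda>z::real^'m. z $ b) has_derivative (\<lambda>h. h $ b)) (at z)"
    by (rule bounded_linear_imp_has_derivative[OF bounded_linear_vec_nth])
  then have "pd (\<lambda>z::real^'m. z $ b) a z = (\<lambda>h. h $ b) (axis a 1)"
    by (rule pd_deriv)
  then show "pd (\<lambda>z::real^'m. z $ b) a z = (if a = b then 1 else 0)"
    by (auto simp: axis_def)
qed

lemma cst_two: "cst 2 = 2"
proof -
  have "cst 2 = cst 1 + cst 1" unfolding cst_add[symmetric] by simp
  then show ?thesis by (simp add: one_add_one)
qed

lemma const_coef_cX: "\<exists>c. fps_nth (cst r * fps_X ^ j) i = (\<lambda>z::real^'m::finite. c)"
  by (rule exI[of _ "if i = j then r else 0"]) (auto simp: cst_def times_fun_def one_fun_def zero_fun_def)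

locale mdq2 = mdq f for f :: "nat \<Rightarrow> real^'n::finite \<Rightarrow> real^'n \<Rightarrow> real^'n" +
  fixes U :: "real^'n \<Rightarrow> real" and M :: "nat \<Rightarrow> real^'n^'n" and K :: nat
  assumes U_sm: "smooth U"
    and M_sym: "\<And>k. transpose (M k) = M k"
begin

definition yc :: "'n \<Rightarrow> ('n + 'n) sf" where "yc c = fps_const (\<lambda>z. z $ Inl c)"
definition vc :: "'n \<Rightarrow> ('n + 'n) sf" where "vc c = fps_const (\<lambda>z. z $ Inr c)"
definition w :: "nat \<Rightarrow> 'n \<Rightarrow> ('n + 'n) sf" where "w r c = (D ^^ r) (yc c)"
definition Mc :: "nat \<Rightarrow> 'n \<Rightarrow> 'n \<Rightarrow> ('n + 'n) sf" where "Mc k c d = cst (M k $ c $ d)"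
definition uk :: "nat \<Rightarrow> 'n \<Rightarrow> ('n + 'n) sf" where "uk k c = (\<Sum>d\<in>UNIV. Mc k c d * w k d)"
definition ek :: "nat \<Rightarrow> real" where "ek k = (-1) ^ (k + 1) * 2 / fact (2 * k)"
definition ck :: "nat \<Rightarrow> real" where "ck k = 2 / fact (2 * k)"
definition Ustar :: "('n + 'n) sf" where "Ustar = fps_const (\<lambda>z. U (yof z))"
definition Lst :: "('n + 'n) sf" where
  "Lst = Ustar + (\<Sum>k\<in>{1..K}. cst (ek k / 2) * fps_X ^ (2 * k - 2) * (\<Sum>c\<in>UNIV. w k c * uk k c))"
definition thkc :: "nat \<Rightarrow> 'n \<Rightarrow> ('n + 'n) \<Rightarrow> ('n + 'n) sf" where
  "thkc k c a = (\<Sum>r<k. cst ((-1) ^ r) * (D ^^ r) (uk k c) * pdf a ((D ^^ (k - 1 - r)) (yc c)))"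
definition th :: "('n + 'n) \<Rightarrow> ('n + 'n) sf" where
  "th a = (\<Sum>k\<in>{1..K}. cst (ek k) * fps_X ^ (2 * k - 2) * (\<Sum>c\<in>UNIV. thkc k c a))"
definition Gc :: "'n \<Rightarrow> ('n + 'n) sf" where "Gc c = fps_const (\<lambda>z. pd U c (yof z))"
definition E :: "'n \<Rightarrow> ('n + 'n) sf" where
  "E c = Gc c - (\<Sum>k\<in>{1..K}. cst (ck k) * fps_X ^ (2 * k - 2) * (\<Sum>d\<in>UNIV. Mc k c d * w (2 * k) d))"

lemma smf_yc[simp, intro]: "smf (yc c)"
  unfolding yc_def by (intro smf_const smooth_vec_nth smooth_id)
lemma smf_vc[simp, intro]: "smf (vc c)"
  unfolding vc_def by (intro smf_const smooth_vec_nth smooth_id)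
lemma smf_w[simp, intro]: "smf (w r c)" unfolding w_def by auto
lemma smf_Mc[simp, intro]: "smf (Mc k c d)" unfolding Mc_def by auto
lemma smf_uk[simp, intro]: "smf (uk k c)" unfolding uk_def by (auto intro!: smf_sum smf_mult)
lemma smf_Ustar[simp, intro]: "smf Ustar"
  unfolding Ustar_def by (intro smf_const smooth_linear_inner[OF bl_yof U_sm])
lemma smf_thkc[simp, intro]: "smf (thkc k c a)"
  unfolding thkc_def by (auto intro!: smf_sum smf_mult smf_pdf)
lemma smf_th[simp, intro]: "smf (th a)"
  unfolding th_def by (auto intro!: smf_sum smf_mult)
lemma smf_Gc[simp, intro]: "smf (Gc c)"
  unfolding Gc_def by (intro smf_const smooth_linear_inner[OF bl_yof] smooth_pd U_sm)
lemma smf_Lst[simp, intro]: "smf Lst"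
  unfolding Lst_def by (auto intro!: smf_sum smf_mult smf_add)
lemma smf_E[simp, intro]: "smf (E c)"
  unfolding E_def by (auto intro!: smf_sum smf_mult smf_diff)

lemma pdf_yc: "pdf a (yc c) = fps_const (\<lambda>z. if a = Inl c then 1 else 0)"
  unfolding yc_def by (subst pdf_fps_const) (auto intro: smooth_vec_nth simp: pd_coord)

lemma pdf_Ustar: "pdf a Ustar = (\<Sum>c\<in>UNIV. Gc c * pdf a (yc c))"
proof -
  have "pd (\<lambda>z. U (yof z)) a = (\<lambda>z. \<Sum>c\<in>UNIV. pd U c (yof z) * (if a = Inl c then 1 else 0))"
  proof (rule ext)
    fix z :: "real^('n+'n)"
    have d: "((\<lambda>z. U (yof z)) has_derivative (\<lambda>h. dirderiv U (yof z) (yof h))) (at z)"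
      by (rule has_derivative_compose[OF bounded_linear_imp_has_derivative[OF bl_yof] smooth_deriv[OF U_sm]])
    have "pd (\<lambda>z. U (yof z)) a z = dirderiv U (yof z) (yof (axis a 1))"
      by (rule pd_deriv[OF d])
    also have "\<dots> = (\<Sum>c\<in>UNIV. yof (axis a 1) $ c * pd U c (yof z))"
      using dirderiv_linear_dir[OF smooth_deriv[OF U_sm]] by simp
    also have "\<dots> = (\<Sum>c\<in>UNIV. pd U c (yof z) * (if a = Inl c then 1 else 0))"
      by (intro sum.cong) (auto simp: yof_def axis_def)
    finally show "pd (\<lambda>z. U (yof z)) a z = (\<Sum>c\<in>UNIV. pd U c (yof z) * (if a = Inl c then 1 else 0))" .
  qed
  then have "pdf a Ustar = fps_const (\<lambda>z. \<Sum>c\<in>UNIV. pd U c (yof z) * (if a = Inl c then 1 else 0))"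
    unfolding Ustar_def by (subst pdf_fps_const) (auto intro: smooth_linear_inner[OF bl_yof U_sm])
  also have "\<dots> = (\<Sum>c\<in>UNIV. Gc c * pdf a (yc c))"
    unfolding Gc_def pdf_yc
    by (simp add: fps_eq_iff fps_sum_nth sum_apply_fun[abs_def] times_fun_def zero_fun_def)
  finally show ?thesis .
qed

lemma M_entry_sym: "M k $ c $ d = M k $ d $ c"
  using M_sym[of k] by (metis transpose_def vec_lambda_beta)

lemma pdf_quad: "pdf a (\<Sum>c\<in>UNIV. w k c * uk k c) = cst 2 * (\<Sum>c\<in>UNIV. uk k c * pdf a (w k c))"
proof -
  have "pdf a (\<Sum>c\<in>UNIV. w k c * uk k c)
      = (\<Sum>c\<in>UNIV. pdf a (w k c) * uk k c) + (\<Sum>c\<in>UNIV. w k c * pdf a (uk k c))"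
    by (simp add: pdf_sum pdf_mult smf_mult sum.distrib)
  also have "(\<Sum>c\<in>UNIV. w k c * pdf a (uk k c)) = (\<Sum>c\<in>UNIV. \<Sum>d\<in>UNIV. w k c * Mc k c d * pdf a (w k d))"
    unfolding uk_def
    by (simp add: pdf_sum smf_mult pdf_const_mult Mc_def const_coef_cX[where j=0, simplified]
        sum_distrib_left mult.assoc)
  also have "\<dots> = (\<Sum>d\<in>UNIV. \<Sum>c\<in>UNIV. w k c * Mc k c d * pdf a (w k d))"
    by (rule sum.swap)
  also have "\<dots> = (\<Sum>d\<in>UNIV. (\<Sum>c\<in>UNIV. Mc k d c * w k c) * pdf a (w k d))"
  proof (rule sum.cong[OF refl])
    fix d
    show "(\<Sum>c\<in>UNIV. w k c * Mc k c d * pdf a (w k d)) = (\<Sum>c\<in>UNIV. Mc k d c * w k c) * pdf a (w k d)"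
      unfolding sum_distrib_right Mc_def M_entry_sym[of k _ d] by (simp add: ac_simps)
  qed
  also have "\<dots> = (\<Sum>d\<in>UNIV. uk k d * pdf a (w k d))"
    unfolding uk_def ..
  finally have "pdf a (\<Sum>c\<in>UNIV. w k c * uk k c) = (\<Sum>c\<in>UNIV. pdf a (w k c) * uk k c) + (\<Sum>d\<in>UNIV. uk k d * pdf a (w k d))" .
  moreover have "(\<Sum>c\<in>UNIV. pdf a (w k c) * uk k c) = (\<Sum>d\<in>UNIV. uk k d * pdf a (w k d))"
    by (simp only: mult.commute)
  ultimately show ?thesis unfolding cst_two mult_2 by simp
qed

end


context mdq2
begin

lemma ek_ck: "ek k * (-1) ^ k = - ck k"
proof -
  have "(-1::real) ^ (k + 1) * (-1) ^ k = (-1) ^ (2 * k + 1)"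
    by (simp add: power_add[symmetric] mult_2)
  also have "\<dots> = -1" by simp
  finally show ?thesis unfolding ek_def ck_def by (simp add: field_simps)
qed

lemma Dpow_uk: "(D ^^ k) (uk k c) = (\<Sum>d\<in>UNIV. Mc k c d * w (2 * k) d)"
proof -
  have "(D ^^ k) (uk k c) = (\<Sum>d\<in>UNIV. Mc k c d * (D ^^ k) (w k d))"
    unfolding uk_def Mc_def by (simp add: Dpow_sum Dpow_cst_mult)
  also have "\<dots> = (\<Sum>d\<in>UNIV. Mc k c d * w (2 * k) d)"
    unfolding w_def by (simp add: mult_2 funpow_add)
  finally show ?thesis .
qed

lemma T1: "pdf a Lst = (\<Sum>c\<in>UNIV. Gc c * pdf a (yc c))
   + (\<Sum>k\<in>{1..K}. cst (ek k) * fps_X ^ (2 * k - 2) * (\<Sum>c\<in>UNIV. uk k c * pdf a (w k c)))"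
proof -
  have "pdf a Lst = pdf a Ustar + (\<Sum>k\<in>{1..K}. pdf a (cst (ek k / 2) * fps_X ^ (2 * k - 2) * (\<Sum>c\<in>UNIV. w k c * uk k c)))"
    unfolding Lst_def by (simp add: pdf_add pdf_sum)
  also have "(\<Sum>k\<in>{1..K}. pdf a (cst (ek k / 2) * fps_X ^ (2 * k - 2) * (\<Sum>c\<in>UNIV. w k c * uk k c)))
     = (\<Sum>k\<in>{1..K}. cst (ek k) * fps_X ^ (2 * k - 2) * (\<Sum>c\<in>UNIV. uk k c * pdf a (w k c)))"
  proof (rule sum.cong[OF refl])
    fix k
    have "pdf a (cst (ek k / 2) * fps_X ^ (2 * k - 2) * (\<Sum>c\<in>UNIV. w k c * uk k c))
        = cst (ek k / 2) * fps_X ^ (2 * k - 2) * pdf a (\<Sum>c\<in>UNIV. w k c * uk k c)"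
      by (rule pdf_const_mult[OF const_coef_cX]) simp
    also have "\<dots> = (cst (ek k / 2) * cst 2) * fps_X ^ (2 * k - 2) * (\<Sum>c\<in>UNIV. uk k c * pdf a (w k c))"
      unfolding pdf_quad by (simp add: ac_simps)
    also have "cst (ek k / 2) * cst 2 = cst (ek k)" by (simp add: cst_mult[symmetric])
    finally show "pdf a (cst (ek k / 2) * fps_X ^ (2 * k - 2) * (\<Sum>c\<in>UNIV. w k c * uk k c))
        = cst (ek k) * fps_X ^ (2 * k - 2) * (\<Sum>c\<in>UNIV. uk k c * pdf a (w k c))" .
  qed
  finally show ?thesis by (simp add: pdf_Ustar)
qed

lemma T2: "(\<Sum>c\<in>UNIV. uk k c * pdf a (w k c)) = (\<Sum>c\<in>UNIV. Lie (thkc k c) a)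
    + (\<Sum>c\<in>UNIV. cst ((-1) ^ k) * (\<Sum>d\<in>UNIV. Mc k c d * w (2 * k) d) * pdf a (yc c))"
proof -
  have "uk k c * pdf a (w k c) = Lie (thkc k c) a
      + cst ((-1) ^ k) * (\<Sum>d\<in>UNIV. Mc k c d * w (2 * k) d) * pdf a (yc c)" for c
  proof -
    have "uk k c * pdf a (w k c) = Lie (\<lambda>a. \<Sum>r<k. cst ((-1) ^ r) * (D ^^ r) (uk k c) * pdf a ((D ^^ (k - 1 - r)) (yc c))) a
     + cst ((-1) ^ k) * (D ^^ k) (uk k c) * pdf a (yc c)"
      unfolding w_def by (rule IBP) auto
    moreover have "(\<lambda>a. \<Sum>r<k. cst ((-1) ^ r) * (D ^^ r) (uk k c) * pdf a ((D ^^ (k - 1 - r)) (yc c))) = thkc k c"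
      unfolding thkc_def by (rule ext) (rule refl)
    ultimately show ?thesis by (simp add: Dpow_uk)
  qed
  then show ?thesis by (simp add: sum.distrib)
qed

lemma T3: "Lie th a = (\<Sum>k\<in>{1..K}. cst (ek k) * fps_X ^ (2 * k - 2) * (\<Sum>c\<in>UNIV. Lie (thkc k c) a))"
proof -
  have "Lie th a = Lie (\<lambda>a. \<Sum>k\<in>{1..K}. cst (ek k) * fps_X ^ (2 * k - 2) * (\<Sum>c\<in>UNIV. thkc k c a)) a"
    unfolding th_def[abs_def] by (rule refl)
  also have "\<dots> = (\<Sum>k\<in>{1..K}. Lie (\<lambda>a. cst (ek k) * fps_X ^ (2 * k - 2) * (\<Sum>c\<in>UNIV. thkc k c a)) a)"
    by (rule Lie_sum) auto
  also have "\<dots> = (\<Sum>k\<in>{1..K}. cst (ek k) * fps_X ^ (2 * k - 2) * (\<Sum>c\<in>UNIV. Lie (thkc k c) a))"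
  proof (rule sum.cong[OF refl])
    fix k
    have "Lie (\<lambda>a. cst (ek k) * fps_X ^ (2 * k - 2) * (\<Sum>c\<in>UNIV. thkc k c a)) a
       = D (cst (ek k) * fps_X ^ (2 * k - 2)) * (\<Sum>c\<in>UNIV. thkc k c a)
         + cst (ek k) * fps_X ^ (2 * k - 2) * Lie (\<lambda>a. \<Sum>c\<in>UNIV. thkc k c a) a"
      by (rule Lie_mult) auto
    also have "D (cst (ek k) * fps_X ^ (2 * k - 2)) = 0" by (simp add: D_mult)
    also have "Lie (\<lambda>a. \<Sum>c\<in>UNIV. thkc k c a) a = (\<Sum>c\<in>UNIV. Lie (thkc k c) a)"
      by (rule Lie_sum) auto
    finally show "Lie (\<lambda>a. cst (ek k) * fps_X ^ (2 * k - 2) * (\<Sum>c\<in>UNIV. thkc k c a)) a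
       = cst (ek k) * fps_X ^ (2 * k - 2) * (\<Sum>c\<in>UNIV. Lie (thkc k c) a)" by simp
  qed
  finally show ?thesis .
qed

lemma main_identity: "pdf a Lst = Lie th a + (\<Sum>c\<in>UNIV. E c * pdf a (yc c))"
proof -
  define V where "V k c = (\<Sum>d\<in>UNIV. Mc k c d * w (2 * k) d)" for k c
  define C where "C k = (cst (ek k) * fps_X ^ (2 * k - 2) :: ('n + 'n) sf)" for k
  have "pdf a Lst = (\<Sum>c\<in>UNIV. Gc c * pdf a (yc c))
     + (\<Sum>k\<in>{1..K}. C k * ((\<Sum>c\<in>UNIV. Lie (thkc k c) a)
         + (\<Sum>c\<in>UNIV. cst ((-1) ^ k) * V k c * pdf a (yc c))))"
    unfolding T1 T2 C_def V_def by (simp add: mult.assoc)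
  also have "\<dots> = (\<Sum>c\<in>UNIV. Gc c * pdf a (yc c)) + Lie th a
     + (\<Sum>k\<in>{1..K}. C k * (\<Sum>c\<in>UNIV. cst ((-1) ^ k) * V k c * pdf a (yc c)))"
    unfolding T3 C_def by (simp add: distrib_left sum.distrib mult.assoc)
  also have "(\<Sum>k\<in>{1..K}. C k * (\<Sum>c\<in>UNIV. cst ((-1) ^ k) * V k c * pdf a (yc c)))
      = - (\<Sum>c\<in>UNIV. (\<Sum>k\<in>{1..K}. cst (ck k) * fps_X ^ (2 * k - 2) * V k c) * pdf a (yc c))"
  proof -
    have "C k * (cst ((-1) ^ k) * V k c * pdf a (yc c))
        = - (cst (ck k) * fps_X ^ (2 * k - 2) * V k c * pdf a (yc c))" for k c
    proof -
      have "C k * (cst ((-1) ^ k) * V k c * pdf a (yc c))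
          = cst (ek k * (-1) ^ k) * fps_X ^ (2 * k - 2) * V k c * pdf a (yc c)"
        unfolding C_def cst_mult by (simp add: ac_simps)
      then show ?thesis unfolding ek_ck cst_minus by simp
    qed
    then have "(\<Sum>k\<in>{1..K}. C k * (\<Sum>c\<in>UNIV. cst ((-1) ^ k) * V k c * pdf a (yc c)))
        = (\<Sum>k\<in>{1..K}. \<Sum>c\<in>UNIV. - (cst (ck k) * fps_X ^ (2 * k - 2) * V k c * pdf a (yc c)))"
      by (simp add: sum_distrib_left)
    also have "\<dots> = (\<Sum>c\<in>UNIV. \<Sum>k\<in>{1..K}. - (cst (ck k) * fps_X ^ (2 * k - 2) * V k c * pdf a (yc c)))"
      by (rule sum.swap)
    also have "\<dots> = - (\<Sum>c\<in>UNIV. (\<Sum>k\<in>{1..K}. cst (ck k) * fps_X ^ (2 * k - 2) * V k c) * pdf a (yc c))"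
      by (simp add: sum_negf sum_distrib_right)
    finally show ?thesis .
  qed
  also have "(\<Sum>c\<in>UNIV. Gc c * pdf a (yc c)) + Lie th a
     + - (\<Sum>c\<in>UNIV. (\<Sum>k\<in>{1..K}. cst (ck k) * fps_X ^ (2 * k - 2) * V k c) * pdf a (yc c))
     = Lie th a + (\<Sum>c\<in>UNIV. E c * pdf a (yc c))"
    unfolding E_def V_def by (simp add: left_diff_distrib sum_subtractf)
  finally show ?thesis .
qed

end


lemma mat_lambda_sum_axis: "(\<chi> i j. f i j) = (\<Sum>i\<in>UNIV. \<Sum>j\<in>UNIV. f i j *\<^sub>R axis i (axis j (1::real)))"
proof -
  have ax: "axis i (axis j (1::real)) $ a $ b = (if i = a then (if j = b then 1 else 0) else 0)" for i j a b
    by (auto simp: axis_def)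
  have "(\<Sum>i\<in>UNIV. \<Sum>j\<in>UNIV. f i j *\<^sub>R axis i (axis j (1::real))) $ a $ b = f a b" for a b
  proof -
    have "(\<Sum>i\<in>UNIV. \<Sum>j\<in>UNIV. f i j *\<^sub>R axis i (axis j (1::real))) $ a $ b
        = (\<Sum>i\<in>UNIV. \<Sum>j\<in>UNIV. f i j * (axis i (axis j (1::real)) $ a $ b))"
      by (simp add: sum_component)
    also have "\<dots> = (\<Sum>i\<in>UNIV. if i = a then f a b else 0)"
    proof (rule sum.cong[OF refl])
      fix i show "(\<Sum>j\<in>UNIV. f i j * (axis i (axis j (1::real)) $ a $ b)) = (if i = a then f a b else 0)"
        unfolding ax by (cases "i = a") (simp_all add: if_distrib[of "\<lambda>x. _ * x"] cong: if_cong)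
    qed
    also have "\<dots> = f a b" by simp
    finally show ?thesis .
  qed
  then show ?thesis by (simp add: vec_eq_iff)
qed

lemma smooth_mat_lambda: "smooth (\<lambda>z. \<chi> i j. f i j z :: real^'l^'k)" if "\<And>i j. smooth (f i j)"
proof -
  have "(\<lambda>z. \<chi> i j. f i j z :: real^'l^'k) = (\<lambda>z. \<Sum>i\<in>UNIV. \<Sum>j\<in>UNIV. f i j z *\<^sub>R axis i (axis j (1::real)))"
    by (rule ext) (rule mat_lambda_sum_axis)
  then show ?thesis by (auto intro!: smooth_sum smooth_scaleR that)
qed

lemma pd_lincomb:
  fixes r :: "'i \<Rightarrow> real"
  assumes "\<And>i. i \<in> S \<Longrightarrow> smooth (g i)"
  shows "pd (\<lambda>x. \<Sum>i\<in>S. r i * g i x) c = (\<lambda>z. \<Sum>i\<in>S. r i * pd (g i) c z)"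
proof (rule ext)
  fix z
  have "((\<lambda>x. \<Sum>i\<in>S. r i * g i x) has_derivative (\<lambda>h. \<Sum>i\<in>S. r i * dirderiv (g i) z h)) (at z)"
  proof (rule has_derivative_sum)
    fix i assume "i \<in> S"
    show "((\<lambda>x. r i * g i x) has_derivative (\<lambda>x. r i * dirderiv (g i) z x)) (at z)"
      by (rule has_derivative_mult_right[OF smooth_deriv[OF assms[OF \<open>i \<in> S\<close>]]])
  qed
  then have "pd (\<lambda>x. \<Sum>i\<in>S. r i * g i x) c z = (\<lambda>h. \<Sum>i\<in>S. r i * dirderiv (g i) z h) (axis c 1)"
    by (rule pd_deriv)
  then show "pd (\<lambda>x. \<Sum>i\<in>S. r i * g i x) c z = (\<Sum>i\<in>S. r i * pd (g i) c z)"
    by (simp add: pd_def)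
qed

context mdq2
begin

definition P :: "('n + 'n) \<Rightarrow> ('n + 'n) \<Rightarrow> ('n + 'n) sf" where
  "P a b = pdf a (th b) - pdf b (th a)"

definition Hs :: "('n + 'n) sf" where
  "Hs = (\<Sum>b\<in>UNIV. th b * Fb b) - Lst"

definition Jm :: "nat \<Rightarrow> real^('n + 'n) \<Rightarrow> real^('n + 'n)^('n + 'n)" where
  "Jm i z = (\<chi> a b. fps_nth (P a b) i z)"

definition Hm :: "nat \<Rightarrow> real^('n + 'n) \<Rightarrow> real" where
  "Hm i = fps_nth Hs i"

lemma smf_P[simp, intro]: "smf (P a b)" unfolding P_def by auto
lemma smf_Hs[simp, intro]: "smf Hs" unfolding Hs_def by (auto intro!: smf_sum smf_mult)

lemma smooth_Jm: "smooth (Jm i)"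
  unfolding Jm_def[abs_def] using smf_P unfolding smf_def
  by (intro smooth_mat_lambda) auto

lemma smooth_Hm: "smooth (Hm i)"
  using smf_Hs unfolding smf_def Hm_def by auto

lemma form_identity:
  "(\<Sum>b\<in>UNIV. P a b * Fb b) = pdf a Hs + (\<Sum>c\<in>UNIV. E c * pdf a (yc c))"
proof -
  have "pdf a Hs = (\<Sum>b\<in>UNIV. pdf a (th b) * Fb b + th b * pdf a (Fb b)) - pdf a Lst"
    unfolding Hs_def by (simp add: pdf_diff pdf_sum pdf_mult smf_sum)
  also have "pdf a Lst = (\<Sum>b\<in>UNIV. Fb b * pdf b (th a)) + (\<Sum>b\<in>UNIV. th b * pdf a (Fb b))
      + (\<Sum>c\<in>UNIV. E c * pdf a (yc c))"
    unfolding main_identity Lie_def D_def ..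
  finally have "pdf a Hs = (\<Sum>b\<in>UNIV. pdf a (th b) * Fb b) - (\<Sum>b\<in>UNIV. Fb b * pdf b (th a))
      - (\<Sum>c\<in>UNIV. E c * pdf a (yc c))"
    by (simp add: sum.distrib algebra_simps)
  moreover have "(\<Sum>b\<in>UNIV. P a b * Fb b) = (\<Sum>b\<in>UNIV. pdf a (th b) * Fb b) - (\<Sum>b\<in>UNIV. Fb b * pdf b (th a))"
    unfolding P_def by (simp add: algebra_simps sum_subtractf)
  ultimately show ?thesis by simp
qed

lemma fps_nth_apply_sum: "fps_nth (\<Sum>b\<in>S. p b) m z = (\<Sum>b\<in>S. fps_nth (p b) m z)"
  by (simp add: fps_sum_nth sum_apply_fun)

lemma fps_nth_apply_mult: "fps_nth (p * q) m z = (\<Sum>i\<le>m. fps_nth p i z * fps_nth q (m - i) z)"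
  by (simp add: fps_mult_nth sum_apply_fun atLeast0AtMost)

lemma coeff_identity:
  assumes E0: "\<And>c j. j \<le> m \<Longrightarrow> fps_nth (E c) j = 0"
  shows "(\<Sum>i\<le>m. Jm i z *v Fv (m - i) z) = grad (Hm m) z"
proof -
  have "(\<Sum>i\<le>m. Jm i z *v Fv (m - i) z) $ a = grad (Hm m) z $ a" for a
  proof -
    have "(\<Sum>i\<le>m. Jm i z *v Fv (m - i) z) $ a = (\<Sum>i\<le>m. \<Sum>b\<in>UNIV. fps_nth (P a b) i z * Fv (m - i) z $ b)"
      by (simp add: sum_component matrix_vector_mult_def Jm_def)
    also have "\<dots> = (\<Sum>b\<in>UNIV. \<Sum>i\<le>m. fps_nth (P a b) i z * fps_nth (Fb b) (m - i) z)"
      by (subst sum.swap) (simp add: Fb_def)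
    also have "\<dots> = fps_nth (\<Sum>b\<in>UNIV. P a b * Fb b) m z"
      by (simp add: fps_nth_apply_sum fps_nth_apply_mult)
    also have "\<dots> = fps_nth (pdf a Hs) m z + (\<Sum>c\<in>UNIV. fps_nth (E c * pdf a (yc c)) m z)"
      unfolding form_identity by (simp add: fps_nth_apply_sum)
    also have "(\<Sum>c\<in>UNIV. fps_nth (E c * pdf a (yc c)) m z) = 0"
      by (simp add: fps_nth_apply_mult E0)
    also have "fps_nth (pdf a Hs) m z = grad (Hm m) z $ a"
      by (simp add: pdf_def grad_def Hm_def)
    finally show ?thesis by simp
  qed
  then show ?thesis by (simp add: vec_eq_iff)
qed

lemma P_skew: "fps_nth (P b a) i z = - fps_nth (P a b) i z" unfolding P_def by simp

lemma P_cyclic: "pdf c (P a b) + pdf a (P b c) + pdf b (P c a) = 0"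
proof -
  have 1: "pdf c (pdf a (th b)) = pdf a (pdf c (th b))" by (rule pdf_comm) simp
  have 2: "pdf c (pdf b (th a)) = pdf b (pdf c (th a))" by (rule pdf_comm) simp
  have 3: "pdf a (pdf b (th c)) = pdf b (pdf a (th c))" by (rule pdf_comm) simp
  show ?thesis unfolding P_def by (simp add: pdf_diff 1 2 3)
qed

lemma closed_Jm: "closed_2form (\<lambda>z. \<Sum>i\<le>N. h ^ i *\<^sub>R Jm i z)"
  unfolding closed_2form_def
proof (intro conjI allI)
  fix z
  show "transpose (\<Sum>i\<le>N. h ^ i *\<^sub>R Jm i z) = - (\<Sum>i\<le>N. h ^ i *\<^sub>R Jm i z)"
  proof -
    have "transpose (\<Sum>i\<le>N. h ^ i *\<^sub>R Jm i z) $ a $ b = (- (\<Sum>i\<le>N. h ^ i *\<^sub>R Jm i z)) $ a $ b" for a b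
    proof -
      have "transpose (\<Sum>i\<le>N. h ^ i *\<^sub>R Jm i z) $ a $ b = (\<Sum>i\<le>N. h ^ i * fps_nth (P b a) i z)"
        by (simp add: transpose_def sum_component Jm_def)
      also have "\<dots> = - (\<Sum>i\<le>N. h ^ i * fps_nth (P a b) i z)"
        by (simp only: P_skew[of b a] mult_minus_right sum_negf)
      also have "\<dots> = (- (\<Sum>i\<le>N. h ^ i *\<^sub>R Jm i z)) $ a $ b"
        by (simp add: sum_component Jm_def)
      finally show ?thesis .
    qed
    then show ?thesis by (simp add: vec_eq_iff)
  qed
next
  fix z a b c
  have ent: "(\<lambda>x. (\<Sum>i\<le>N. h ^ i *\<^sub>R Jm i x) $ a $ b) = (\<lambda>x. \<Sum>i\<le>N. h ^ i * fps_nth (P a b) i x)" for a b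
    by (simp add: sum_component Jm_def)
  have pdent: "pd (\<lambda>x. (\<Sum>i\<le>N. h ^ i *\<^sub>R Jm i x) $ a $ b) c z = (\<Sum>i\<le>N. h ^ i * fps_nth (pdf c (P a b)) i z)" for a b c
    unfolding ent using smf_P[of a b] unfolding smf_def
    by (subst pd_lincomb) (auto simp: pdf_def)
  have "(\<Sum>i\<le>N. h ^ i * fps_nth (pdf c (P a b)) i z) + (\<Sum>i\<le>N. h ^ i * fps_nth (pdf a (P b c)) i z)
      + (\<Sum>i\<le>N. h ^ i * fps_nth (pdf b (P c a)) i z)
      = (\<Sum>i\<le>N. h ^ i * fps_nth (pdf c (P a b) + pdf a (P b c) + pdf b (P c a)) i z)"
    by (simp add: sum.distrib distrib_left)
  also have "\<dots> = 0" unfolding P_cyclic by simp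
  finally show "pd (\<lambda>x. (\<Sum>i\<le>N. h ^ i *\<^sub>R Jm i x) $ a $ b) c z + pd (\<lambda>x. (\<Sum>i\<le>N. h ^ i *\<^sub>R Jm i x) $ b $ c) a z
      + pd (\<lambda>x. (\<Sum>i\<le>N. h ^ i *\<^sub>R Jm i x) $ c $ a) b z = 0"
    unfolding pdent .
qed

end


lemma yof_join[simp]: "yof (join a b) = a" by (simp add: yof_def join_def vec_eq_iff)
lemma vof_join[simp]: "vof (join a b) = b" by (simp add: vof_def join_def vec_eq_iff)
lemma yof_add: "yof (x + y) = yof x + yof y" by (simp add: yof_def vec_eq_iff)
lemma vof_add: "vof (x + y) = vof x + vof y" by (simp add: vof_def vec_eq_iff)
lemma yof_scale: "yof (t *\<^sub>R x) = t *\<^sub>R yof x" by (simp add: yof_def vec_eq_iff)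
lemma vof_scale: "vof (t *\<^sub>R x) = t *\<^sub>R vof x" by (simp add: vof_def vec_eq_iff)
lemma join_add: "join (a + a') (b + b') = join a b + join a' b'"
  by (simp add: join_def vec_eq_iff split: sum.splits)
lemma join_zero[simp]: "join 0 0 = 0"
  by (simp add: join_def vec_eq_iff split: sum.splits)

lemma fnth_sum: "fps_nth (\<Sum>b\<in>S. p b) m z = (\<Sum>b\<in>S. fps_nth (p b) m z)"
  by (simp add: fps_sum_nth sum_apply_fun)

lemma fnth_mult: "fps_nth (p * q) m z = (\<Sum>i\<le>m. fps_nth p i z * fps_nth q (m - i) z)"
  by (simp add: fps_mult_nth sum_apply_fun atLeast0AtMost)

definition liftsm :: "(nat \<Rightarrow> real^'n::finite \<Rightarrow> real^'n \<Rightarrow> real^'n) \<Rightarrow> bool" where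
  "liftsm G \<longleftrightarrow> (\<forall>i. smooth (\<lambda>z::real^('n + 'n). G i (yof z) (vof z)))"

lemma Dt_lift:
  "Dt f G m (yof z) (vof z) = dirderiv (\<lambda>x. G m (yof x) (vof x)) z (join (vof z) 0)
     + (\<Sum>a\<le>m. dirderiv (\<lambda>x. G a (yof x) (vof x)) z (join 0 (f (m - a) (yof z) (vof z))))"
proof -
  have 1: "dirderiv (\<lambda>y'. G m y' (vof z)) (yof z) (vof z) = dirderiv (\<lambda>x. G m (yof x) (vof x)) z (join (vof z) 0)"
    unfolding dirderiv_def by (simp add: yof_add vof_add yof_scale vof_scale)
  have 2: "dirderiv (\<lambda>v'. G a (yof z) v') (vof z) (f (m - a) (yof z) (vof z))
       = dirderiv (\<lambda>x. G a (yof x) (vof x)) z (join 0 (f (m - a) (yof z) (vof z)))" for a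
    unfolding dirderiv_def by (simp add: yof_add vof_add yof_scale vof_scale)
  show ?thesis unfolding Dt_def 1 2 ..
qed

lemma liftsm_Dt: "liftsm f \<Longrightarrow> liftsm G \<Longrightarrow> liftsm (Dt f G)"
  unfolding liftsm_def
proof
  fix m assume f: "\<forall>i. smooth (\<lambda>z. f i (yof z) (vof z))"
    and G: "\<forall>i. smooth (\<lambda>z. G i (yof z) (vof z))"
  show "smooth (\<lambda>z. Dt f G m (yof z) (vof z))"
    unfolding Dt_lift using f G
    by (intro smooth_add smooth_sum smooth_dd_field smooth_join) auto
qed

lemma liftsm_Dpow: "liftsm f \<Longrightarrow> liftsm G \<Longrightarrow> liftsm (Dpow f k G)"
  by (induction k) (auto intro: liftsm_Dt)

lemma Dpow_cong:
  assumes "\<forall>i\<le>n. f1 i = f2 i" "\<forall>i\<le>n. G1 i = G2 i"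
  shows "j \<le> n \<Longrightarrow> Dpow f1 k G1 j = Dpow f2 k G2 j"
proof (induction k arbitrary: j)
  case 0 then show ?case using assms by simp
next
  case (Suc k)
  have IH: "\<And>a. a \<le> j \<Longrightarrow> Dpow f1 k G1 a = Dpow f2 k G2 a" using Suc by auto
  have ff: "\<And>a. a \<le> j \<Longrightarrow> f1 (j - a) = f2 (j - a)" using Suc.prems assms(1) by auto
  show ?case
  proof (intro ext)
    fix y v
    show "Dpow f1 (Suc k) G1 j y v = Dpow f2 (Suc k) G2 j y v"
      unfolding Dpow.simps Dt_def using IH[of j] IH ff
      by (intro arg_cong2[where f="(+)"] sum.cong) auto
  qed
qed

context mdq
begin

lemma liftsm_f: "liftsm f" unfolding liftsm_def using f_sm by auto

definition serG :: "(nat \<Rightarrow> real^'n \<Rightarrow> real^'n \<Rightarrow> real^'n) \<Rightarrow> 'n \<Rightarrow> ('n + 'n) sf" where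
  "serG G c = Abs_fps (\<lambda>i z. G i (yof z) (vof z) $ c)"

lemma pd_comp_nth:
  assumes "smooth F"
  shows "pd (\<lambda>x. F x $ c) b z = pd F b z $ c"
proof -
  have "((\<lambda>x. F x $ c) has_derivative (\<lambda>h. dirderiv F z h $ c)) (at z)"
    by (rule bounded_linear.has_derivative[OF bounded_linear_vec_nth smooth_deriv[OF assms]])
  then show ?thesis by (subst pd_deriv) (auto simp: pd_def)
qed

lemma dd_nth_expand:
  assumes "smooth F"
  shows "dirderiv F z w $ c = (\<Sum>b\<in>UNIV. w $ b * pd (\<lambda>x. F x $ c) b z)"
  using dirderiv_linear_dir[OF smooth_deriv[OF assms], of z w]
  by (simp add: sum_component pd_comp_nth[OF assms])

lemma D_serG:
  assumes G: "liftsm G"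
  shows "D (serG G c) = serG (Dt f G) c"
proof (rule fps_ext, rule ext)
  fix m z
  define pi where "pi j b = pd (\<lambda>x. G j (yof x) (vof x) $ c) b z" for j b
  have smG: "smooth (\<lambda>x. G j (yof x) (vof x))" for j using G unfolding liftsm_def by auto
  have "fps_nth (D (serG G c)) m z = (\<Sum>b\<in>UNIV. \<Sum>i\<le>m. Fv i z $ b * pi (m - i) b)"
    unfolding D_def by (simp add: fnth_sum fnth_mult Fb_def serG_def pdf_def pi_def)
  also have "\<dots> = (\<Sum>i\<le>m. \<Sum>b\<in>UNIV. Fv i z $ b * pi (m - i) b)" by (rule sum.swap)
  also have "\<dots> = (\<Sum>i\<le>m. (\<Sum>b\<in>UNIV. join (if i = 0 then vof z else 0) 0 $ b * pi (m - i) b)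
      + (\<Sum>b\<in>UNIV. join 0 (f i (yof z) (vof z)) $ b * pi (m - i) b))"
  proof (rule sum.cong[OF refl])
    fix i
    have "Fv i z = join (if i = 0 then vof z else 0) 0 + join 0 (f i (yof z) (vof z))"
      unfolding Fv_def join_add[symmetric] by simp
    then show "(\<Sum>b\<in>UNIV. Fv i z $ b * pi (m - i) b) = (\<Sum>b\<in>UNIV. join (if i = 0 then vof z else 0) 0 $ b * pi (m - i) b)
      + (\<Sum>b\<in>UNIV. join 0 (f i (yof z) (vof z)) $ b * pi (m - i) b)"
      by (simp add: distrib_right sum.distrib)
  qed
  also have "\<dots> = (\<Sum>i\<le>m. (if i = 0 then (\<Sum>b\<in>UNIV. join (vof z) 0 $ b * pi m b) else 0))
      + (\<Sum>i\<le>m. \<Sum>b\<in>UNIV. join 0 (f i (yof z) (vof z)) $ b * pi (m - i) b)"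
  proof -
    have jz: "(\<Sum>b\<in>UNIV. join (if i = 0 then vof z else 0) 0 $ b * pi (m - i) b)
       = (if i = 0 then (\<Sum>b\<in>UNIV. join (vof z) 0 $ b * pi m b) else 0)" for i
      by (cases "i = 0") simp_all
    show ?thesis by (simp only: sum.distrib jz)
  qed
  also have "(\<Sum>i\<le>m. (if i = 0 then (\<Sum>b\<in>UNIV. join (vof z) 0 $ b * pi m b) else 0))
      = (\<Sum>b\<in>UNIV. join (vof z) 0 $ b * pi m b)" by simp
  also have "(\<Sum>i\<le>m. \<Sum>b\<in>UNIV. join 0 (f i (yof z) (vof z)) $ b * pi (m - i) b)
      = (\<Sum>a\<le>m. \<Sum>b\<in>UNIV. join 0 (f (m - a) (yof z) (vof z)) $ b * pi a b)"
  proof -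
    have "(\<Sum>a\<le>m. \<Sum>b\<in>UNIV. join 0 (f (m - a) (yof z) (vof z)) $ b * pi a b)
        = (\<Sum>a<Suc m. (\<lambda>i. \<Sum>b\<in>UNIV. join 0 (f i (yof z) (vof z)) $ b * pi (m - i) b) (Suc m - Suc a))"
      by (simp add: lessThan_Suc_atMost)
    also have "\<dots> = (\<Sum>i<Suc m. \<Sum>b\<in>UNIV. join 0 (f i (yof z) (vof z)) $ b * pi (m - i) b)"
      by (rule sum.nat_diff_reindex)
    finally show ?thesis by (simp add: lessThan_Suc_atMost)
  qed
  also have "(\<Sum>b\<in>UNIV. join (vof z) 0 $ b * pi m b)
      + (\<Sum>a\<le>m. \<Sum>b\<in>UNIV. join 0 (f (m - a) (yof z) (vof z)) $ b * pi a b)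
      = fps_nth (serG (Dt f G) c) m z"
    unfolding serG_def fps_nth_Abs_fps Dt_lift pi_def
    by (simp add: dd_nth_expand[OF smG] sum_component)
  finally show "fps_nth (D (serG G c)) m z = fps_nth (serG (Dt f G) c) m z" .
qed

lemma Dpow_serG: "liftsm G \<Longrightarrow> (D ^^ k) (serG G c) = serG (Dpow f k G) c"
  by (induction k) (auto simp: D_serG liftsm_Dpow liftsm_f)

end


lemma fnth_cX: "fps_nth (cst r * fps_X ^ p * S) j z = (if p \<le> j then r * fps_nth S (j - p) z else 0)"
proof -
  have "cst r * fps_X ^ p * S = fps_const (\<lambda>z. r) * (fps_X ^ p * S)"
    by (simp add: cst_def mult.assoc)
  then show ?thesis by (simp add: fps_X_power_mult_nth times_fun_def)
qed

lemma fnth_cX0: "fps_nth (cst r * fps_X ^ p * S) 0 z = (if p = 0 then r * fps_nth S 0 z else 0)"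
  using fnth_cX[of r p S 0 z] by simp

lemma delta2: "(\<Sum>d\<in>UNIV. (if (c::'a::finite) = d then 1 else 0) * (if c' = d then 1 else 0)) = (if c = c' then 1 else (0::real))"
proof -
  have "(if c = d then 1 else 0) * (if c' = d then 1 else 0) = (if c = d then (if c' = c then 1 else 0) else (0::real))" for d
    by auto
  then have "(\<Sum>d\<in>UNIV. (if c = d then 1 else 0) * (if c' = d then 1 else 0)) = (\<Sum>d\<in>UNIV. (if c = d then (if c' = c then 1 else 0) else (0::real)))"
    by (intro sum.cong) auto
  also have "\<dots> = (if c' = c then 1 else 0)" by (simp add: sum.delta')
  finally show ?thesis by auto
qed

lemma fnth_const: "fps_nth (fps_const \<phi>) j z = (if j = 0 then \<phi> z else 0)"
  by simp

locale mdq3 = mdq2 f U M K for f :: "nat \<Rightarrow> real^'n::finite \<Rightarrow> real^'n \<Rightarrow> real^'n" and U M K +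
  assumes M1: "M 1 = mat 1" and K1: "1 \<le> K" and f0: "f 0 = (\<lambda>y v. grad U y)"
begin

lemma D_coord: "D (fps_const (\<lambda>z. z $ b0)) = Fb b0"
proof -
  have "pdf b (fps_const (\<lambda>z. z $ b0)) = (if b = b0 then 1 else 0)" for b
    by (subst pdf_fps_const) (auto intro: smooth_vec_nth simp: pd_coord one_fun_def[symmetric] zero_fun_def[symmetric])
  then show ?thesis unfolding D_def by (simp add: if_distrib[of "\<lambda>x. _ * x"] cong: if_cong)
qed

lemma D_yc: "D (yc c) = vc c"
  unfolding yc_def D_coord
  by (rule fps_ext, rule ext) (simp add: Fb_def Fv_def vc_def join_def vof_def)

lemma D_vc: "D (vc c) = serG f c"
  unfolding vc_def D_coord
  by (rule fps_ext, rule ext) (simp add: Fb_def Fv_def serG_def join_def)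

lemma w1: "w 1 c = vc c" unfolding w_def by (simp add: D_yc)

lemma w_shift: "w (j + 2) c = serG (Dpow f j f) c"
proof -
  have "w (j + 2) c = (D ^^ j) ((D ^^ 2) (yc c))" unfolding w_def by (simp only: funpow_add comp_def)
  also have "(D ^^ 2) (yc c) = serG f c" by (simp add: numeral_2_eq_2 D_yc D_vc)
  also have "(D ^^ j) (serG f c) = serG (Dpow f j f) c" by (rule Dpow_serG[OF liftsm_f])
  finally show ?thesis .
qed

lemma w_2k: "1 \<le> k \<Longrightarrow> w (2 * k) c = serG (Dpow f (2 * k - 2) f) c"
proof -
  assume "1 \<le> k"
  then have "2 * k - 2 + 2 = 2 * k" by simp
  then show ?thesis using w_shift[of "2 * k - 2" c] by simp
qed

lemma E_coeff: "fps_nth (E c) j z = (if j = 0 then pd U c (yof z) else 0)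
   - (\<Sum>k\<in>{1..K}. if 2 * k - 2 \<le> j
        then ck k * (M k *v Dpow f (2 * k - 2) f (j - (2 * k - 2)) (yof z) (vof z)) $ c else 0)"
proof -
  have V: "fps_nth (\<Sum>d\<in>UNIV. Mc k c d * w (2 * k) d) i z = (M k *v Dpow f (2 * k - 2) f i (yof z) (vof z)) $ c"
    if "k \<in> {1..K}" for k i
  proof -
    have "fps_nth (Mc k c d * w (2 * k) d) i z = M k $ c $ d * Dpow f (2 * k - 2) f i (yof z) (vof z) $ d" for d
      using that unfolding Mc_def cst_def by (simp add: w_2k serG_def)
    then show ?thesis by (simp add: fnth_sum matrix_vector_mult_def)
  qed
  have "fps_nth (E c) j z = fps_nth (Gc c) j z
     - (\<Sum>k\<in>{1..K}. fps_nth (cst (ck k) * fps_X ^ (2 * k - 2) * (\<Sum>d\<in>UNIV. Mc k c d * w (2 * k) d)) j z)"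
    unfolding E_def by (simp only: fps_sub_nth fun_diff_def fnth_sum)
  also have "\<dots> = fps_nth (Gc c) j z
     - (\<Sum>k\<in>{1..K}. if 2 * k - 2 \<le> j then ck k * fps_nth (\<Sum>d\<in>UNIV. Mc k c d * w (2 * k) d) (j - (2 * k - 2)) z else 0)"
    by (simp only: fnth_cX)
  also have "\<dots> = fps_nth (Gc c) j z
     - (\<Sum>k\<in>{1..K}. if 2 * k - 2 \<le> j then ck k * (M k *v Dpow f (2 * k - 2) f (j - (2 * k - 2)) (yof z) (vof z)) $ c else 0)"
    by (intro arg_cong2[where f="(-)"] refl sum.cong) (auto simp: V)
  also have "fps_nth (Gc c) j z = (if j = 0 then pd U c (yof z) else 0)"
    unfolding Gc_def by simp
  finally show ?thesis .
qed

lemma ek1: "ek 1 = 1" by (simp add: ek_def)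
lemma ck1: "ck 1 = 1" by (simp add: ck_def)

lemma uk1: "uk 1 c = vc c"
proof -
  have "Mc 1 c d * w 1 d = (if d = c then vc c else 0)" for d
    unfolding Mc_def M1 w1 by (auto simp: mat_def)
  then show ?thesis unfolding uk_def by simp
qed

lemma uk1'[simp]: "uk (Suc 0) c = vc c" using uk1 by simp
lemma w1'[simp]: "w (Suc 0) c = vc c" using w1 by simp

lemma sum_K1: "(\<Sum>k\<in>{1..K}. (if 2 * k - 2 = 0 then g k else 0)) = g 1"
proof -
  have "(\<Sum>k\<in>{1..K}. (if 2 * k - 2 = 0 then g k else 0)) = (\<Sum>k\<in>{1..K}. (if k = 1 then g k else 0))"
    by (intro sum.cong refl) auto
  also have "\<dots> = g 1" using K1 by simp
  finally show ?thesis .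
qed

lemma th0: "fps_nth (th b) 0 z = (\<Sum>c\<in>UNIV. (if b = Inl c then 1 else 0) * z $ Inr c)"
proof -
  have "fps_nth (th b) 0 z = (\<Sum>k\<in>{1..K}. (if 2 * k - 2 = 0 then ek k * fps_nth (\<Sum>c\<in>UNIV. thkc k c b) 0 z else 0))"
    unfolding th_def by (simp only: fnth_sum fnth_cX0)
  also have "\<dots> = fps_nth (\<Sum>c\<in>UNIV. thkc 1 c b) 0 z" by (simp only: sum_K1 ek1 mult_1)
  also have "\<dots> = (\<Sum>c\<in>UNIV. (if b = Inl c then 1 else 0) * z $ Inr c)"
    unfolding thkc_def by (simp add: fnth_sum uk1 vc_def pdf_yc mult.commute)
  finally show ?thesis .
qed

lemma Lst0: "fps_nth Lst 0 z = U (yof z) + (1/2) * (\<Sum>c\<in>UNIV. z $ Inr c * z $ Inr c)"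
proof -
  have "fps_nth Lst 0 z = U (yof z) + (\<Sum>k\<in>{1..K}. (if 2 * k - 2 = 0 then ek k / 2 * fps_nth (\<Sum>c\<in>UNIV. w k c * uk k c) 0 z else 0))"
    unfolding Lst_def Ustar_def by (simp only: fnth_sum fnth_cX0 fps_add_nth plus_fun_apply) simp
  also have "\<dots> = U (yof z) + (1/2) * fps_nth (\<Sum>c\<in>UNIV. w 1 c * uk 1 c) 0 z" by (simp only: sum_K1 ek1)
  also have "\<dots> = U (yof z) + (1/2) * (\<Sum>c\<in>UNIV. z $ Inr c * z $ Inr c)"
    by (simp add: fnth_sum w1 uk1 vc_def)
  finally show ?thesis .
qed

lemma Jm0: "Jm 0 z = Jstd"
proof -
  have pth: "pd (fps_nth (th b) 0) a z = (\<Sum>c\<in>UNIV. (if b = Inl c then 1 else 0) * (if a = Inr c then 1 else 0))" for a b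
  proof -
    have "fps_nth (th b) 0 = (\<lambda>z. \<Sum>c\<in>UNIV. (if b = Inl c then 1 else 0) * z $ Inr c)"
      using th0 by auto
    then show ?thesis by (simp only:) (subst pd_lincomb, auto intro: smooth_vec_nth simp: pd_coord)
  qed
  show ?thesis
    unfolding Jm_def P_def
    by (simp add: vec_eq_iff Jstd_def pdf_def fun_diff_def pth delta2 split: sum.splits)
qed

lemma Hm0: "Hm 0 = Ham U"
proof (rule ext)
  fix z :: "real^('n + 'n)"
  have "Hm 0 z = (\<Sum>b\<in>UNIV. fps_nth (th b) 0 z * Fv 0 z $ b) - fps_nth Lst 0 z"
    unfolding Hm_def Hs_def by (simp add: fnth_sum Fb_def fun_diff_def)
  also have "(\<Sum>b\<in>UNIV. fps_nth (th b) 0 z * Fv 0 z $ b) = (\<Sum>c\<in>UNIV. z $ Inr c * z $ Inr c)"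
  proof -
    have "(\<Sum>b\<in>UNIV. fps_nth (th b) 0 z * Fv 0 z $ b)
        = (\<Sum>b\<in>UNIV. \<Sum>c\<in>UNIV. (if b = Inl c then z $ Inr c * Fv 0 z $ b else 0))"
      unfolding th0 by (simp add: sum_distrib_right if_distrib[of "\<lambda>x. x * _"] cong: if_cong)
    also have "\<dots> = (\<Sum>c\<in>UNIV. \<Sum>b\<in>UNIV. (if b = Inl c then z $ Inr c * Fv 0 z $ b else 0))"
      by (rule sum.swap)
    also have "\<dots> = (\<Sum>c\<in>UNIV. z $ Inr c * Fv 0 z $ Inl c)" by simp
    also have "\<dots> = (\<Sum>c\<in>UNIV. z $ Inr c * z $ Inr c)"
      by (simp add: Fv_def join_def vof_def)
    finally show ?thesis .
  qed
  also have "(\<Sum>c\<in>UNIV. z $ Inr c * z $ Inr c) - fps_nth Lst 0 z = Ham U z"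
    unfolding Lst0 Ham_def
    by (simp add: power2_norm_eq_inner inner_vec_def vof_def)
  finally show "Hm 0 z = Ham U z" .
qed

end


lemma smooth_mv: "smooth X \<Longrightarrow> smooth (\<lambda>z. (M::real^'a^'b) *v X z)"
  unfolding matrix_vector_mult_def
  by (intro smooth_vec_lambda smooth_sum smooth_mult smooth_const smooth_vec_nth)

lemma smooth_grad_comp: "smooth U \<Longrightarrow> smooth (\<lambda>z. grad U (yof z))"
  unfolding grad_def
  by (intro smooth_vec_lambda smooth_linear_inner[OF bl_yof] smooth_pd)

lemma moment_sym: "(\<forall>j\<in>{1..s div 2}. transpose (A j) = A j) \<Longrightarrow> transpose (moment s A k) = moment s A k"
proof -
  assume a: "\<forall>j\<in>{1..s div 2}. transpose (A j) = A j"
  have "transpose (moment s A k) $ p $ q = moment s A k $ p $ q" for p q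
  proof -
    have "transpose (moment s A k) $ p $ q = (\<Sum>j=1..s div 2. real j ^ (2 * k) * A j $ q $ p)"
      by (simp add: transpose_def moment_def sum_component)
    also have "\<dots> = (\<Sum>j=1..s div 2. real j ^ (2 * k) * A j $ p $ q)"
    proof (rule sum.cong[OF refl])
      fix j assume "j \<in> {1..s div 2}"
      then have "transpose (A j) = A j" using a by blast
      then have "A j $ q $ p = A j $ p $ q" by (metis transpose_def vec_lambda_beta)
      then show "real j ^ (2 * k) * A j $ q $ p = real j ^ (2 * k) * A j $ p $ q" by simp
    qed
    also have "\<dots> = moment s A k $ p $ q" by (simp add: moment_def sum_component)
    finally show ?thesis .
  qed
  then show ?thesis by (simp add: vec_eq_iff)
qed

theorem theorem2p2:
  fixes s N :: nat
    and A :: "nat \<Rightarrow> real^'n^'n"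
    and U :: "real^'n \<Rightarrow> real"
    and g :: "nat \<Rightarrow> real^'n \<Rightarrow> real^'n \<Rightarrow> real^'n"
  assumes "even s"
    and "\<forall>j\<in>{1..s div 2}. transpose (A j) = A j"
    and "(\<Sum>j=1..s div 2. (real j ^ 2) *\<^sub>R A j) = mat 1"
    and "smooth U"
    and "is_modified_equation s A U N g"
  shows "\<exists>(Jc :: nat \<Rightarrow> real^('n + 'n) \<Rightarrow> real^('n + 'n)^('n + 'n))
           (Hc :: nat \<Rightarrow> real^('n + 'n) \<Rightarrow> real).
           Jc 0 = (\<lambda>z. Jstd) \<and> Hc 0 = Ham U
         \<and> (\<forall>i\<le>N. smooth (Jc i) \<and> smooth (Hc i))
         \<and> (\<forall>h::real. closed_2form (\<lambda>z. \<Sum>i\<le>N. h ^ i *\<^sub>R Jc i z))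
         \<and> (\<forall>m\<le>N. \<forall>z. (\<Sum>a\<le>m. Jc a z *v Fmod U g (m - a) z) = grad (Hc m) z)"
proof -
  note symA = assms(2) and M1 = assms(3) and smU = assms(4) and modeq = assms(5)
  define f' where "f' = (\<lambda>i. if i \<le> N then fser U g i else (\<lambda>y v. 0))"
  have gexp: "g m y v = - (\<Sum>k=2..m div 2 + 1.
            (2 / fact (2*k)) *\<^sub>R (moment s A k *v Dpow (fser U g) (2*k - 2) (fser U g) (m - (2*k - 2)) y v))"
    if "1 \<le> m" "m \<le> N" for m y v
    using modeq that unfolding is_modified_equation_def by blast
  have f'_le: "i \<le> N \<Longrightarrow> f' i = fser U g i" for i unfolding f'_def by simp
  have Dpow_f': "j \<le> N \<Longrightarrow> Dpow (fser U g) r (fser U g) j = Dpow f' r f' j" for r j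
    by (rule Dpow_cong[of N]) (auto simp: f'_le)
  have smf': "smooth (\<lambda>z. f' i (yof z) (vof z))" for i
  proof (induction i rule: less_induct)
    case (less i)
    show ?case
    proof (cases "i \<le> N")
      case False then show ?thesis unfolding f'_def by simp
    next
      case True
      show ?thesis
      proof (cases "i = 0")
        case True then show ?thesis unfolding f'_def fser_def using smooth_grad_comp[OF smU] by simp
      next
        case False
        define f'' where "f'' = (\<lambda>j. if j < i then f' j else (\<lambda>y v. 0))"
        have lf'': "liftsm f''" unfolding liftsm_def f''_def using less by auto
        have eqD: "Dpow (fser U g) (2*k - 2) (fser U g) (i - (2*k - 2)) = Dpow f'' (2*k - 2) f'' (i - (2*k - 2))"
          if "k \<in> {2..i div 2 + 1}" for k
        proof (rule Dpow_cong[of "i - (2*k - 2)"])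
          have "i - (2*k - 2) < i" using that \<open>i \<noteq> 0\<close> by auto
          then show "\<forall>j\<le>i - (2 * k - 2). fser U g j = f'' j" "\<forall>j\<le>i - (2 * k - 2). fser U g j = f'' j"
            using \<open>i \<le> N\<close> by (auto simp: f''_def f'_le)
        qed simp
        have fz: "f' i (yof z) (vof z) = - (\<Sum>k=2..i div 2 + 1.
            (2 / fact (2*k)) *\<^sub>R (moment s A k *v Dpow f'' (2*k - 2) f'' (i - (2*k - 2)) (yof z) (vof z)))" for z
        proof -
          have "f' i (yof z) (vof z) = g i (yof z) (vof z)"
            using \<open>i \<le> N\<close> \<open>i \<noteq> 0\<close> by (simp add: f'_le fser_def)
          also have "\<dots> = - (\<Sum>k=2..i div 2 + 1.
            (2 / fact (2*k)) *\<^sub>R (moment s A k *v Dpow (fser U g) (2*k - 2) (fser U g) (i - (2*k - 2)) (yof z) (vof z)))"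
            by (rule gexp) (use \<open>i \<le> N\<close> \<open>i \<noteq> 0\<close> in auto)
          also have "\<dots> = - (\<Sum>k=2..i div 2 + 1.
            (2 / fact (2*k)) *\<^sub>R (moment s A k *v Dpow f'' (2*k - 2) f'' (i - (2*k - 2)) (yof z) (vof z)))"
          proof (intro arg_cong[where f=uminus] sum.cong refl)
            fix k assume k: "k \<in> {2..i div 2 + 1}"
            show "(2 / fact (2*k)) *\<^sub>R (moment s A k *v Dpow (fser U g) (2*k - 2) (fser U g) (i - (2*k - 2)) (yof z) (vof z))
              = (2 / fact (2*k)) *\<^sub>R (moment s A k *v Dpow f'' (2*k - 2) f'' (i - (2*k - 2)) (yof z) (vof z))"
              by (simp only: eqD[OF k])
          qed
          finally show ?thesis .
        qed
        have "(\<lambda>z. f' i (yof z) (vof z)) = (\<lambda>z. - (\<Sum>k=2..i div 2 + 1.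
            (2 / fact (2*k)) *\<^sub>R (moment s A k *v Dpow f'' (2*k - 2) f'' (i - (2*k - 2)) (yof z) (vof z))))"
          using fz by (rule ext)
        moreover have "smooth (\<lambda>z. - (\<Sum>k=2..i div 2 + 1.
            (2 / fact (2*k)) *\<^sub>R (moment s A k *v Dpow f'' (2*k - 2) f'' (i - (2*k - 2)) (yof z) (vof z))))"
          using liftsm_Dpow[OF lf'' lf''] unfolding liftsm_def
          by (intro smooth_minus smooth_sum smooth_scaleR smooth_const smooth_mv) auto
        ultimately show ?thesis by simp
      qed
    qed
  qed
  have M1': "moment s A 1 = mat 1" using M1 by (simp add: moment_def)
  interpret I: mdq3 f' U "moment s A" "Suc N"
  proof unfold_locales
    show "smooth (\<lambda>z. f' i (yof z) (vof z))" for i by (rule smf')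
    show "smooth U" by (rule smU)
    show "transpose (moment s A k) = moment s A k" for k by (rule moment_sym[OF symA])
    show "moment s A 1 = mat 1" by (rule M1')
    show "1 \<le> Suc N" by simp
    show "f' 0 = (\<lambda>y v. grad U y)" by (rule ext)+ (simp add: f'_def fser_def)
  qed
  \<comment> \<open>the residual of the Euler-Lagrange equation vanishes up to order N\<close>
  have E0: "fps_nth (I.E c) j = 0" if "j \<le> N" for c j
  proof (rule ext)
    fix z :: "real^('n + 'n)"
    define y where "y = yof z"
    define v where "v = vof z"
    define T where "T k = I.ck k * (moment s A k *v Dpow f' (2 * k - 2) f' (j - (2 * k - 2)) y v) $ c" for k
    have "fps_nth (I.E c) j z = (if j = 0 then pd U c y else 0) - (\<Sum>k\<in>{1..Suc N}. if 2 * k - 2 \<le> j then T k else 0)"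
      unfolding I.E_coeff T_def y_def v_def ..
    also have "(\<Sum>k\<in>{1..Suc N}. if 2 * k - 2 \<le> j then T k else 0)
        = T 1 + (\<Sum>k\<in>{2..Suc N}. if 2 * k - 2 \<le> j then T k else 0)"
      by (subst sum.atLeast_Suc_atMost) (auto simp: numeral_2_eq_2)
    also have "(\<Sum>k\<in>{2..Suc N}. if 2 * k - 2 \<le> j then T k else 0) = (\<Sum>k\<in>{k \<in> {2..Suc N}. 2 * k - 2 \<le> j}. T k)"
      by (rule sum.inter_filter[symmetric]) simp
    also have "{k \<in> {2..Suc N}. 2 * k - 2 \<le> j} = {2..j div 2 + 1}"
      using that by auto
    also have "T 1 = f' j y v $ c"
    proof -
      have "moment s A (Suc 0) = mat 1" using M1' by simp
      moreover have "I.ck (Suc 0) = 1" using I.ck1 by simp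
      ultimately show ?thesis unfolding T_def by simp
    qed
    finally have Ez: "fps_nth (I.E c) j z = (if j = 0 then pd U c y else 0) - (f' j y v $ c + (\<Sum>k\<in>{2..j div 2 + 1}. T k))" .
    have "fps_nth (I.E c) j z = 0"
    proof (cases "j = 0")
      case True
      then show ?thesis unfolding Ez by (simp add: f'_def fser_def grad_def)
    next
      case False
      have "f' j y v $ c = - (\<Sum>k\<in>{2..j div 2 + 1}. T k)"
      proof -
        have "f' j y v = g j y v" using that False by (simp add: f'_le fser_def)
        also have "\<dots> = - (\<Sum>k=2..j div 2 + 1.
            (2 / fact (2*k)) *\<^sub>R (moment s A k *v Dpow (fser U g) (2*k - 2) (fser U g) (j - (2*k - 2)) y v))"
          using that False by (intro gexp) auto
        finally have fc: "f' j y v $ c = - (\<Sum>k=2..j div 2 + 1.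
            (2 / fact (2*k)) * (moment s A k *v Dpow (fser U g) (2*k - 2) (fser U g) (j - (2*k - 2)) y v) $ c)"
          by (simp add: sum_component)
        have Seq: "(\<Sum>k=2..j div 2 + 1.
            (2 / fact (2*k)) * (moment s A k *v Dpow (fser U g) (2*k - 2) (fser U g) (j - (2*k - 2)) y v) $ c)
            = (\<Sum>k\<in>{2..j div 2 + 1}. T k)"
        proof (rule sum.cong[OF refl])
          fix k
          have "j - (2*k - 2) \<le> N" using that by simp
          then show "(2 / fact (2*k)) * (moment s A k *v Dpow (fser U g) (2*k - 2) (fser U g) (j - (2*k - 2)) y v) $ c = T k"
            unfolding T_def I.ck_def by (simp only: Dpow_f')
        qed
        show ?thesis using fc unfolding Seq .
      qed
      then show ?thesis unfolding Ez using False by simp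
    qed
    then show "fps_nth (I.E c) j z = 0 z" by simp
  qed
  have Fm: "Fmod U g i z = I.Fv i z" if "i \<le> N" for i z
    using that unfolding Fmod_def I.Fv_def by (simp add: f'_le fser_def)
  show ?thesis
  proof (intro exI conjI allI impI)
    show "I.Jm 0 = (\<lambda>z. Jstd)" by (rule ext) (rule I.Jm0)
    show "I.Hm 0 = Ham U" by (rule I.Hm0)
    show "smooth (I.Jm i)" for i by (rule I.smooth_Jm)
    show "smooth (I.Hm i)" for i by (rule I.smooth_Hm)
    show "closed_2form (\<lambda>z. \<Sum>i\<le>N. h ^ i *\<^sub>R I.Jm i z)" for h by (rule I.closed_Jm)
    fix m z assume m: "m \<le> N"
    have "(\<Sum>a\<le>m. I.Jm a z *v Fmod U g (m - a) z) = (\<Sum>a\<le>m. I.Jm a z *v I.Fv (m - a) z)"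
      using m by (intro sum.cong refl) (simp add: Fm)
    also have "\<dots> = grad (I.Hm m) z"
      by (rule I.coeff_identity) (use E0 m in auto)
    finally show "(\<Sum>a\<le>m. I.Jm a z *v Fmod U g (m - a) z) = grad (I.Hm m) z" .
  qed
qed


end
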